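(* Let $\Omega\subset\mathbb{R}^2$ be a bounded smooth domain, $\phi\in W^{1,\infty}(\Omega)$, $\chi>0$, $r\in\mathbb{R}$, $\mu>0$, and let $(n,w,u,P)$ be a global classical solution of \[ \begin{cases} n_t+u\cdot\nabla n=\Delta n+\chi\nabla\cdot(n\nabla w)+n(r-\mu n), & x\in\Omega,\ t>0,\\ w_t+u\cdot\nabla w=\Delta w-|\nabla w|^2+n, & x\in\Omega,\ t>0,\\ u_t+(u\cdot\nabla)u=\Delta u+\nabla P+n\nabla\phi,\quad \nabla\cdot u=0, & x\in\Omega,\ t>0,\\ \nabla n\cdot\nu=\nabla w\cdot\nu=0,\ u=0, & x\in\partial\Omega,\ t>0, \end{cases} \] with $n(\cdot,0)=n_0\ge0$, $n_0\in C^0(\bar\Omega)$, $n_0\not\equiv0$, $n\ge0$, $w\ge 0$. Then (i) $\limsup_{t\to\infty}\|n(\cdot,t)\|_{L^1(\Omega)}\le\frac{|\Omega|r_+}{\mu}$; (ii) for all $t_0\ge0$ and $t>t_0$, $\int_{t_0}^t\|n(\cdot,s)\|_{L^2(\Omega)}^2ds\le\frac{r_+}{\mu}\int_{t_0}^t\|n(\cdot,s)\|_{L^1(\Omega)}ds+\frac1\mu\|n(\cdot,t_0)\|_{L^1(\Omega)}$; (iii) for all $t_0\ge0$ and $t>t_0$, $\int_{t_0}^t\int_\Omega|\nabla w|^2dxds\le\int_\Omega w(x,t_0)dx+\int_{t_0}^t\|n(\cdot,s)\|_{L^1(\Omega)}ds$. Moreover, if $r\le0$, then $\|n(\cdot,t)\|_{L^1(\Omega)}\le\frac{|\Omega|}{\mu(t+\gamma)}$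 for all $t>0$, where $\gamma=\frac{|\Omega|}{\mu\int_\Omega n_0}$.
   Context: $\nu$ denotes the outward unit normal; $r_+=\max\{r,0\}$. This system arises from the chemotaxis–Navier–Stokes system with singular sensitivity $-\chi\nabla\cdot(\frac nc\nabla c)$ and consumption $-nc$ via $w=-\ln(c/\|c_0\|_{L^\infty(\Omega)})$. *)

theory Defs
  imports "HOL-Analysis.Analysis"
begin

type_synonym pt = "real ^ 2"

definition has_pd :: "2 \<Rightarrow> (pt \<Rightarrow> real) \<Rightarrow> pt \<Rightarrow> real \<Rightarrow> bool" where
  "has_pd i g x d \<longleftrightarrow> ((\<lambda>h. g (x + h *\<^sub>R axis i 1)) has_real_derivative d) (at 0)"

definition pdiff :: "2 \<Rightarrow> (pt \<Rightarrow> real) \<Rightarrow> pt \<Rightarrow> bool" where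
  "pdiff i g x \<longleftrightarrow> (\<exists>d. has_pd i g x d)"

definition pd :: "2 \<Rightarrow> (pt \<Rightarrow> real) \<Rightarrow> pt \<Rightarrow> real" where
  "pd i g x = deriv (\<lambda>h. g (x + h *\<^sub>R axis i 1)) 0"

definition grad :: "(pt \<Rightarrow> real) \<Rightarrow> pt \<Rightarrow> pt" where
  "grad g x = (\<chi> i. pd i g x)"

definition lap :: "(pt \<Rightarrow> real) \<Rightarrow> pt \<Rightarrow> real" where
  "lap g x = (\<Sum>i\<in>UNIV. pd i (pd i g) x)"

definition divg :: "(pt \<Rightarrow> pt) \<Rightarrow> pt \<Rightarrow> real" where
  "divg F x = (\<Sum>i\<in>UNIV. pd i (\<lambda>y. F y $ i) x)"

definition dt :: "(pt \<Rightarrow> real \<Rightarrow> real) \<Rightarrow> pt \<Rightarrow> real \<Rightarrow> real" where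
  "dt f x t = deriv (\<lambda>s. f x s) t"

definition ucomp :: "(pt \<Rightarrow> real \<Rightarrow> pt) \<Rightarrow> 2 \<Rightarrow> pt \<Rightarrow> real \<Rightarrow> real" where
  "ucomp u i = (\<lambda>x t. u x t $ i)"

definition vdt :: "(pt \<Rightarrow> real \<Rightarrow> pt) \<Rightarrow> pt \<Rightarrow> real \<Rightarrow> pt" where
  "vdt u x t = (\<chi> i. dt (ucomp u i) x t)"

definition vlap :: "(pt \<Rightarrow> real \<Rightarrow> pt) \<Rightarrow> pt \<Rightarrow> real \<Rightarrow> pt" where
  "vlap u x t = (\<chi> i. lap (\<lambda>y. u y t $ i) x)"

definition conv :: "(pt \<Rightarrow> real \<Rightarrow> pt) \<Rightarrow> (pt \<Rightarrow> real \<Rightarrow> pt) \<Rightarrow> pt \<Rightarrow> real \<Rightarrow> pt" where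
  "conv u v x t = (\<chi> i. u x t \<bullet> grad (\<lambda>y. v y t $ i) x)"

definition smooth_fun :: "(pt \<Rightarrow> real) \<Rightarrow> bool" where
  "smooth_fun g \<longleftrightarrow> (\<exists>D :: 2 list \<Rightarrow> pt \<Rightarrow> real. D [] = g \<and>
     (\<forall>ks. continuous_on UNIV (D ks) \<and> (\<forall>i x. has_pd i (D ks) x (D (i # ks) x))))"

definition defining_function :: "pt set \<Rightarrow> (pt \<Rightarrow> real) \<Rightarrow> bool" where
  "defining_function \<Omega> \<rho> \<longleftrightarrow> smooth_fun \<rho> \<and> \<Omega> = {x. \<rho> x < 0} \<and>
     (\<forall>x. \<rho> x = 0 \<longrightarrow> grad \<rho> x \<noteq> 0)"

definition smooth_bounded_domain :: "pt set \<Rightarrow> bool" where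
  "smooth_bounded_domain \<Omega> \<longleftrightarrow> open \<Omega> \<and> connected \<Omega> \<and> bounded \<Omega> \<and> \<Omega> \<noteq> {} \<and>
     (\<exists>\<rho>. defining_function \<Omega> \<rho>)"

definition outward_normal :: "pt set \<Rightarrow> pt \<Rightarrow> pt" where
  "outward_normal \<Omega> x =
     (let \<rho> = (SOME \<rho>. defining_function \<Omega> \<rho>) in (1 / norm (grad \<rho> x)) *\<^sub>R grad \<rho> x)"

text \<open>W^{1,infinity}(Omega) for a bounded smooth domain: bounded Lipschitz functions on Omega.\<close>

definition W1inf :: "pt set \<Rightarrow> (pt \<Rightarrow> real) \<Rightarrow> bool" where
  "W1inf \<Omega> \<phi> \<longleftrightarrow> bounded (\<phi> ` \<Omega>) \<and>
     (\<exists>L. \<forall>x\<in>\<Omega>. \<forall>y\<in>\<Omega>. \<bar>\<phi> x - \<phi> y\<bar> \<le> L * dist x y)"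

definition ext_cont :: "pt set \<Rightarrow> (pt \<Rightarrow> real \<Rightarrow> real) \<Rightarrow> bool" where
  "ext_cont \<Omega> F \<longleftrightarrow> (\<exists>G. continuous_on (closure \<Omega> \<times> {0<..}) G \<and>
     (\<forall>x\<in>\<Omega>. \<forall>t>0. G (x, t) = F x t))"

definition C21 :: "pt set \<Rightarrow> (pt \<Rightarrow> real \<Rightarrow> real) \<Rightarrow> bool" where
  "C21 \<Omega> f \<longleftrightarrow>
     continuous_on (closure \<Omega> \<times> {0..}) (\<lambda>(x, t). f x t) \<and>
     (\<forall>x\<in>\<Omega>. \<forall>t>0.
        (\<forall>i. pdiff i (\<lambda>y. f y t) x) \<and>
        (\<forall>i j. pdiff j (pd i (\<lambda>y. f y t)) x) \<and>
        (\<lambda>s. f x s) differentiable (at t)) \<and>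
     (\<forall>i. ext_cont \<Omega> (\<lambda>x t. pd i (\<lambda>y. f y t) x)) \<and>
     (\<forall>i j. ext_cont \<Omega> (\<lambda>x t. pd j (pd i (\<lambda>y. f y t)) x)) \<and>
     ext_cont \<Omega> (dt f)"

definition C10 :: "pt set \<Rightarrow> (pt \<Rightarrow> real \<Rightarrow> real) \<Rightarrow> bool" where
  "C10 \<Omega> P \<longleftrightarrow>
     continuous_on (\<Omega> \<times> {0<..}) (\<lambda>(x, t). P x t) \<and>
     (\<forall>x\<in>\<Omega>. \<forall>t>0. \<forall>i. pdiff i (\<lambda>y. P y t) x) \<and>
     (\<forall>i. continuous_on (\<Omega> \<times> {0<..}) (\<lambda>(x, t). pd i (\<lambda>y. P y t) x))"

definition classical_solution ::
  "pt set \<Rightarrow> (pt \<Rightarrow> real) \<Rightarrow> real \<Rightarrow> real \<Rightarrow> real \<Rightarrow> (pt \<Rightarrow> real) \<Rightarrow>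
   (pt \<Rightarrow> real \<Rightarrow> real) \<Rightarrow> (pt \<Rightarrow> real \<Rightarrow> real) \<Rightarrow> (pt \<Rightarrow> real \<Rightarrow> pt) \<Rightarrow> (pt \<Rightarrow> real \<Rightarrow> real) \<Rightarrow> bool"
  where
  "classical_solution \<Omega> \<phi> chi r \<mu> n0 n w u P \<longleftrightarrow>
     C21 \<Omega> n \<and> C21 \<Omega> w \<and> (\<forall>i. C21 \<Omega> (ucomp u i)) \<and> C10 \<Omega> P \<and>
     (\<forall>x\<in>closure \<Omega>. n x 0 = n0 x) \<and>
     (\<forall>x\<in>\<Omega>. \<forall>t>0.
        dt n x t + u x t \<bullet> grad (\<lambda>y. n y t) x
          = lap (\<lambda>y. n y t) x + chi * divg (\<lambda>y. n y t *\<^sub>R grad (\<lambda>z. w z t) y) x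
            + n x t * (r - \<mu> * n x t)) \<and>
     (\<forall>x\<in>\<Omega>. \<forall>t>0.
        dt w x t + u x t \<bullet> grad (\<lambda>y. w y t) x
          = lap (\<lambda>y. w y t) x - (norm (grad (\<lambda>y. w y t) x))\<^sup>2 + n x t) \<and>
     (\<forall>x\<in>\<Omega>. \<forall>t>0. \<phi> differentiable (at x) \<longrightarrow>
        vdt u x t + conv u u x t
          = vlap u x t + grad (\<lambda>y. P y t) x + n x t *\<^sub>R grad \<phi> x) \<and>
     (\<forall>x\<in>\<Omega>. \<forall>t>0. divg (\<lambda>y. u y t) x = 0) \<and>
     (\<forall>x\<in>frontier \<Omega>. \<forall>t>0.
        ((\<lambda>y. grad (\<lambda>z. n z t) y \<bullet> outward_normal \<Omega> x) \<longlongrightarrow> 0) (at x within \<Omega>) \<and>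
        ((\<lambda>y. grad (\<lambda>z. w z t) y \<bullet> outward_normal \<Omega> x) \<longlongrightarrow> 0) (at x within \<Omega>) \<and>
        u x t = 0)"

end

theory Submission
  imports Defs
begin

lemma pd_eq: "has_pd i g x d \<Longrightarrow> pd i g x = d"
  unfolding has_pd_def pd_def by (rule DERIV_imp_deriv)

lemma pdiff_has_pd: "pdiff i g x \<Longrightarrow> has_pd i g x (pd i g x)"
  unfolding pdiff_def using pd_eq by metis

lemma has_pd_pdiff: "has_pd i g x d \<Longrightarrow> pdiff i g x"
  unfolding pdiff_def by blast

lemma has_pd_add: "has_pd i f x a \<Longrightarrow> has_pd i g x b \<Longrightarrow> has_pd i (\<lambda>y. f y + g y) x (a + b)"
  unfolding has_pd_def by (rule derivative_intros)

lemma has_pd_diff: "has_pd i f x a \<Longrightarrow> has_pd i g x b \<Longrightarrow> has_pd i (\<lambda>y. f y - g y) x (a - b)"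
  unfolding has_pd_def by (rule derivative_intros)

lemma has_pd_mult: "has_pd i f x a \<Longrightarrow> has_pd i g x b \<Longrightarrow>
   has_pd i (\<lambda>y. f y * g y) x (a * g x + f x * b)"
  unfolding has_pd_def by (auto intro!: derivative_eq_intros)

lemma has_pd_cmult: "has_pd i f x a \<Longrightarrow> has_pd i (\<lambda>y. c * f y) x (c * a)"
  unfolding has_pd_def by (auto intro!: derivative_eq_intros)

lemma has_pd_const: "has_pd i (\<lambda>y. c) x 0"
  unfolding has_pd_def by (rule derivative_intros)

lemma has_pd_comp:
  assumes "has_pd i f x a" "(\<phi> has_real_derivative d) (at (f x))"
  shows "has_pd i (\<lambda>y. \<phi> (f y)) x (d * a)"
proof -
  have a: "((\<lambda>h. f (x + h *\<^sub>R axis i 1)) has_real_derivative a) (at 0)"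
    using assms(1) unfolding has_pd_def .
  have b: "(\<phi> has_real_derivative d) (at ((\<lambda>h. f (x + h *\<^sub>R axis i 1)) 0))"
    using assms(2) by simp
  show ?thesis using DERIV_chain[OF b a] unfolding has_pd_def by (simp add: o_def)
qed

lemma has_pd_local:
  assumes "has_pd i g x d" "open S" "x \<in> S" "\<And>y. y \<in> S \<Longrightarrow> f y = g y"
  shows "has_pd i f x d"
proof -
  have o: "open ((\<lambda>h::real. x + h *\<^sub>R axis i 1) -` S)"
    by (rule continuous_open_vimage[OF \<open>open S\<close>]) (auto intro!: continuous_intros)
  show ?thesis
    using assms(1) unfolding has_pd_def
    by (rule has_field_derivative_transform_within_open[OF _ o]) (use assms in auto)
qed

lemma has_pd_line:
  assumes "has_pd i G (x + s *\<^sub>R axis i 1) d"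
  shows "((\<lambda>h. G (x + h *\<^sub>R axis i 1)) has_real_derivative d) (at s)"
proof -
  have "((\<lambda>h. G (x + s *\<^sub>R axis i 1 + h *\<^sub>R axis i 1)) has_real_derivative d) (at 0)"
    using assms unfolding has_pd_def .
  then have "((\<lambda>h. G (x + (h + s) *\<^sub>R axis i 1)) has_real_derivative d) (at 0)"
    by (simp add: algebra_simps scaleR_add_left)
  then show ?thesis using DERIV_shift[of "\<lambda>h. G (x + h *\<^sub>R axis i 1)" d 0 s] by simp
qed


lemma cont_bdd_integrable:
  fixes f :: "'a::euclidean_space \<Rightarrow> real"
  assumes S: "S \<in> lmeasurable" and c: "continuous_on S f" and b: "\<And>x. x \<in> S \<Longrightarrow> \<bar>f x\<bar> \<le> B"
  shows "f absolutely_integrable_on S" "f integrable_on S"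
proof -
  have m: "f \<in> borel_measurable (lebesgue_on S)"
    using continuous_imp_measurable_on_sets_lebesgue[OF c] S by auto
  show "f absolutely_integrable_on S"
    by (rule measurable_bounded_by_integrable_imp_absolutely_integrable[OF m, of "\<lambda>_. B"])
       (use S b integrable_on_const in auto)
  then show "f integrable_on S" using absolutely_integrable_on_def by blast
qed

lemma compact_bound:
  fixes f :: "'a::metric_space \<Rightarrow> real"
  assumes "compact S" "continuous_on S f"
  obtains B where "\<And>x. x \<in> S \<Longrightarrow> \<bar>f x\<bar> \<le> B"
proof -
  have "bounded (f ` S)" using assms compact_continuous_image compact_imp_bounded by blast
  then obtain B where "\<And>y. y \<in> f ` S \<Longrightarrow> norm y \<le> B" unfolding bounded_iff by blast
  then show ?thesis using that by force
qed

lemma translate_integral: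
  fixes G :: "pt \<Rightarrow> real"
  assumes GI: "(G has_integral I) (cbox (-a) a)" and G0: "\<And>x. x \<notin> cbox (-a) a \<Longrightarrow> G x = 0"
  shows "((\<lambda>x. G (x + c)) has_integral I) UNIV"
proof -
  have 1: "((\<lambda>x. G (x + c)) has_integral I) (cbox (-a - c) (a - c))"
    using has_integral_shift_cbox[OF GI, of c] .
  show ?thesis
  proof (rule has_integral_on_superset[OF 1])
    fix x assume "x \<notin> cbox (- a - c) (a - c)"
    then obtain j where "\<not> ((- a - c) $ j \<le> x $ j \<and> x $ j \<le> (a - c) $ j)" unfolding mem_box_cart by blast
    then have "\<not> ((- a) $ j \<le> (x + c) $ j \<and> (x + c) $ j \<le> a $ j)" by auto
    then have "x + c \<notin> cbox (-a) a" unfolding mem_box_cart by blast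
    then show "G (x + c) = 0" using G0 by blast
  qed auto
qed

lemma ibp_compact:
  fixes G g :: "pt \<Rightarrow> real"
  assumes Gc: "continuous_on UNIV G" and K: "compact K" and G0: "\<And>x. x \<notin> K \<Longrightarrow> G x = 0"
    and dG: "\<And>x. has_pd i G x (g x)" and gB: "\<And>x. \<bar>g x\<bar> \<le> B"
  shows "g integrable_on UNIV \<and> integral UNIV g = 0"
proof -
  define e where "e = (axis i 1 :: pt)"
  have ne: "norm e = 1" by (simp add: e_def)
  have B0: "0 \<le> B" using gB[of 0] by linarith
  obtain R where R: "0 < R" "\<And>x. x \<in> K \<Longrightarrow> norm x \<le> R"
    using compact_imp_bounded[OF K] unfolding bounded_pos by blast
  define a where "a = R *\<^sub>R (1::pt)"
  have inbox: "x \<in> cbox (-a) a" if "norm x \<le> R" for x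
    unfolding mem_box_cart a_def
  proof
    fix j
    have "\<bar>x $ j\<bar> \<le> R" using component_le_norm_cart[of x j] that by linarith
    then show "(- (R *\<^sub>R 1)) $ j \<le> x $ j \<and> x $ j \<le> (R *\<^sub>R (1::pt)) $ j"
      by (simp add: abs_le_iff)
  qed
  have Gout: "G x = 0" if "x \<notin> cbox (-a) a" for x
    using G0 R inbox that by blast
  obtain BG where BG: "\<And>x. x \<in> cbox (-a) a \<Longrightarrow> \<bar>G x\<bar> \<le> BG"
    using compact_bound[OF compact_cbox continuous_on_subset[OF Gc]] by blast
  have GIa: "G integrable_on cbox (-a) a"
    by (rule cont_bdd_integrable(2)[OF _ continuous_on_subset[OF Gc] BG]) auto
  then obtain I where GI: "(G has_integral I) (cbox (-a) a)" by blast
  have GU: "(G has_integral I) UNIV"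
    by (rule has_integral_on_superset[OF GI]) (use Gout in auto)
  define h where "h k = 1 / real (Suc k)" for k
  have hpos: "h k > 0" for k by (simp add: h_def)
  have hle: "h k \<le> 1" for k by (simp add: h_def)
  have hlim: "h \<longlonglongrightarrow> 0" unfolding h_def using LIMSEQ_Suc[OF lim_1_over_n] by simp
  define f where "f k x = (1 / h k) * (G (x + h k *\<^sub>R e) - G x)" for k x
  have fI: "(f k has_integral 0) UNIV" for k
  proof -
    have "((\<lambda>x. G (x + h k *\<^sub>R e)) has_integral I) UNIV"
      by (rule translate_integral[OF GI Gout])
    from has_integral_diff[OF this GU] have "((\<lambda>x. G (x + h k *\<^sub>R e) - G x) has_integral 0) UNIV"
      by simp
    from has_integral_mult_right[OF this, of "1 / h k"] show ?thesis
      unfolding f_def by simp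
  qed
  define hb where "hb x = (if x \<in> cball 0 (R + 1) then B else 0)" for x :: pt
  have hbI: "hb integrable_on UNIV"
    unfolding hb_def integrable_restrict_UNIV by (rule integrable_on_const) simp
  have mvt: "\<bar>G (x + s *\<^sub>R e) - G x\<bar> \<le> B * \<bar>s\<bar>" for x s
  proof -
    have "norm ((\<lambda>h. G (x + h *\<^sub>R e)) s - (\<lambda>h. G (x + h *\<^sub>R e)) 0) \<le> B * norm (s - 0)"
    proof (rule field_differentiable_bound[where S=UNIV and f'="\<lambda>z. g (x + z *\<^sub>R e)"])
      fix z :: real
      show "((\<lambda>h. G (x + h *\<^sub>R e)) has_field_derivative g (x + z *\<^sub>R e)) (at z within UNIV)"
        using has_pd_line[of i G x z] dG unfolding e_def by simp
      show "norm (g (x + z *\<^sub>R e)) \<le> B" using gB by simp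
    qed auto
    then show ?thesis by simp
  qed
  have fb: "norm (f k x) \<le> hb x" for k x
  proof (cases "x \<in> cball 0 (R + 1)")
    case True
    have "\<bar>f k x\<bar> = \<bar>G (x + h k *\<^sub>R e) - G x\<bar> / h k"
      unfolding f_def using hpos[of k] by (simp add: abs_mult)
    also have "\<dots> \<le> B * h k / h k"
      using mvt[of x "h k"] hpos[of k] by (intro divide_right_mono) auto
    also have "\<dots> = B" using hpos[of k] by simp
    finally show ?thesis using True by (simp add: hb_def)
  next
    case False
    then have nx: "norm x > R + 1" by (simp add: dist_norm)
    have "norm (x + h k *\<^sub>R e) \<ge> norm x - norm (h k *\<^sub>R e)"
      using norm_triangle_ineq[of "x + h k *\<^sub>R e" "- (h k *\<^sub>R e)"] by simp
    moreover have "norm (h k *\<^sub>R e) \<le> 1" using hle[of k] hpos[of k] ne by simp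
    ultimately have "norm (x + h k *\<^sub>R e) > R" using nx by linarith
    then have "G (x + h k *\<^sub>R e) = 0" "G x = 0" using G0 R nx by force+
    then show ?thesis using False by (simp add: f_def hb_def)
  qed
  have fc: "(\<lambda>k. f k x) \<longlonglongrightarrow> g x" for x
  proof -
    have "((\<lambda>s. G (x + s *\<^sub>R e)) has_real_derivative g x) (at 0)"
      using dG[of x] unfolding has_pd_def e_def .
    then have "((\<lambda>s. (G (x + s *\<^sub>R e) - G x) / s) \<longlongrightarrow> g x) (at 0)"
      unfolding DERIV_def by simp
    then have "((\<lambda>s. (G (x + s *\<^sub>R e) - G x) / s) \<circ> h) \<longlonglongrightarrow> g x"
    proof -
      have "\<forall>i. h i \<in> UNIV - {0}" using hpos by (simp add: less_imp_neq[symmetric])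
      with hlim show ?thesis using \<open>((\<lambda>s. (G (x + s *\<^sub>R e) - G x) / s) \<longlongrightarrow> g x) (at 0)\<close>
        unfolding tendsto_at_iff_sequentially by blast
    qed
    then show ?thesis unfolding f_def comp_def by simp
  qed
  have fint: "f k integrable_on UNIV" for k using fI by blast
  note dc = dominated_convergence[of f UNIV hb g, OF fint hbI fb fc]
  have "(\<lambda>k. integral UNIV (f k)) = (\<lambda>k. 0)" using fI integral_unique by blast
  then have "(\<lambda>k. integral UNIV (f k)) \<longlonglongrightarrow> 0" by simp
  then have "integral UNIV g = 0" using dc(2) LIMSEQ_unique by blast
  then show ?thesis using dc(1) by blast
qed


definition m2 :: "real \<Rightarrow> real" where "m2 s = (max 0 s)\<^sup>2"

lemma m2_deriv: "(m2 has_real_derivative 2 * max 0 s) (at s)"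
proof -
  consider "s < 0" | "s = 0" | "s > 0" by linarith
  then show ?thesis
  proof cases
    case 1
    have "((\<lambda>x. 0::real) has_real_derivative 2 * max 0 s) (at s)" using 1 by (simp add: DERIV_const)
    then show ?thesis
      by (rule has_field_derivative_transform_within_open[where S="{..<0}"]) (use 1 in \<open>auto simp: m2_def\<close>)
  next
    case 3
    have "((\<lambda>x. x\<^sup>2) has_real_derivative 2 * s) (at s)" by (auto intro!: derivative_eq_intros)
    then have "((\<lambda>x. x\<^sup>2) has_real_derivative 2 * max 0 s) (at s)" using 3 by simp
    then show ?thesis
      by (rule has_field_derivative_transform_within_open[where S="{0<..}"]) (use 3 in \<open>auto simp: m2_def\<close>)
  next
    case 2
    have "((\<lambda>h. (m2 (0 + h) - m2 0) / h) \<longlongrightarrow> 0) (at 0)"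
    proof (rule Lim_null_comparison)
      show "\<forall>\<^sub>F h in at 0. norm ((m2 (0 + h) - m2 0) / h) \<le> \<bar>h\<bar>"
      proof (rule always_eventually, rule allI)
        fix h :: real
        show "norm ((m2 (0 + h) - m2 0) / h) \<le> \<bar>h\<bar>"
        proof (cases "h > 0")
          case True then show ?thesis by (simp add: m2_def power2_eq_square)
        next
          case False then show ?thesis by (simp add: m2_def)
        qed
      qed
      show "((\<lambda>h. \<bar>h\<bar>) \<longlongrightarrow> 0) (at (0::real))"
        using tendsto_rabs[OF tendsto_ident_at[of 0 UNIV]] by simp
    qed
    then show ?thesis using 2 unfolding DERIV_def by simp
  qed
qed

definition hsr :: "real \<Rightarrow> real" where "hsr s = 2 * (m2 s - 2 * m2 (s - 1/2) + m2 (s - 1))"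
definition hdr :: "real \<Rightarrow> real" where "hdr s = 4 * (max 0 s - 2 * max 0 (s - 1/2) + max 0 (s - 1))"

lemma hsr_deriv: "(hsr has_real_derivative hdr s) (at s)"
proof -
  have a: "((\<lambda>x. m2 (x - c)) has_real_derivative 2 * max 0 (s - c)) (at s)" for c
  proof -
    have g: "((\<lambda>x. x - c) has_real_derivative 1) (at s)" by (auto intro!: derivative_eq_intros)
    have f: "(m2 has_real_derivative 2 * max 0 (s - c)) (at ((\<lambda>x. x - c) s))" by (simp add: m2_deriv)
    show ?thesis using DERIV_chain[OF f g] by (simp add: o_def)
  qed
  have "((\<lambda>x. 2 * (m2 (x - 0) - 2 * m2 (x - 1/2) + m2 (x - 1))) has_real_derivative
      2 * (2 * max 0 (s - 0) - 2 * (2 * max 0 (s - 1/2)) + 2 * max 0 (s - 1))) (at s)"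
    by (intro DERIV_cmult DERIV_add DERIV_diff a)
  then show ?thesis unfolding hsr_def hdr_def by (simp add: algebra_simps)
qed

lemma hsr_zero: "s \<le> 0 \<Longrightarrow> hsr s = 0"
  by (simp add: hsr_def m2_def)

lemma hsr_one: "s \<ge> 1 \<Longrightarrow> hsr s = 1"
  by (simp add: hsr_def m2_def power2_eq_square algebra_simps)

lemma hsr_bounds: "0 \<le> hsr s \<and> hsr s \<le> 1"
proof -
  consider "s \<le> 0" | "0 < s \<and> s \<le> 1/2" | "1/2 < s \<and> s < 1" | "1 \<le> s" by linarith
  then show ?thesis
  proof cases
    case 2
    then have "hsr s = 2 * s\<^sup>2" by (simp add: hsr_def m2_def)
    moreover have "s * s \<le> (1/2) * (1/2)" using 2 by (intro mult_mono) auto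
    then have "s\<^sup>2 \<le> 1/4" by (simp add: power2_eq_square)
    ultimately show ?thesis by simp
  next
    case 3
    then have "hsr s = 1 - 2 * (1 - s)\<^sup>2" by (simp add: hsr_def m2_def power2_eq_square algebra_simps)
    moreover have "(1 - s) * (1 - s) \<le> (1/2) * (1/2)" using 3 by (intro mult_mono) auto
    then have "(1 - s)\<^sup>2 \<le> 1/4" by (simp add: power2_eq_square)
    ultimately show ?thesis by simp
  qed (auto simp: hsr_zero hsr_one)
qed

lemma hdr_nonneg: "0 \<le> hdr s"
  unfolding hdr_def by (cases "s \<le> 0"; cases "s \<le> 1/2"; cases "s \<le> 1") (auto simp: max_def)

lemma hdr_zero: "s \<le> 0 \<or> s \<ge> 1 \<Longrightarrow> hdr s = 0"
  unfolding hdr_def by (cases "s \<le> 0"; cases "s \<le> 1/2"; cases "s \<le> 1") (auto simp: max_def)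

lemma hdr_cont: "continuous_on UNIV hdr"
  unfolding hdr_def by (intro continuous_intros)

lemma hdr_le: "hdr s \<le> 2"
  unfolding hdr_def by (cases "s \<le> 0"; cases "s \<le> 1/2"; cases "s \<le> 1") (auto simp: max_def)


locale dom =
  fixes \<Omega> :: "pt set" and \<rho> :: "pt \<Rightarrow> real" and D :: "2 list \<Rightarrow> pt \<Rightarrow> real"
  assumes \<Omega>o: "open \<Omega>" and \<Omega>b: "bounded \<Omega>" and \<Omega>r: "\<Omega> = {x. \<rho> x < 0}"
    and D0: "D [] = \<rho>" and Dc: "\<And>ks. continuous_on UNIV (D ks)"
    and Dd: "\<And>ks i x. has_pd i (D ks) x (D (i # ks) x)"
    and ng: "\<And>x. \<rho> x = 0 \<Longrightarrow> (\<chi> i. D [i] x) \<noteq> 0"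
begin

definition gr where "gr x = (\<chi> i. D [i] x)"
definition psi where "psi e x = hsr (- \<rho> x / e - 1)"
definition dpsi where "dpsi e i x = hdr (- \<rho> x / e - 1) * (- D [i] x / e)"

lemma rho_cont: "continuous_on UNIV \<rho>"
  using Dc[of "[]"] D0 by simp

lemma closure_sub: "closure \<Omega> \<subseteq> {x. \<rho> x \<le> 0}"
  by (rule closure_minimal) (use \<Omega>r rho_cont in \<open>auto intro!: closed_Collect_le continuous_intros\<close>)

lemma compact_cl: "compact (closure \<Omega>)"
  using \<Omega>b by simp

lemma lmeas: "\<Omega> \<in> lmeasurable"
  using lmeasurable_open \<Omega>b \<Omega>o by blast

lemma frontier_rho: "x \<in> frontier \<Omega> \<Longrightarrow> \<rho> x = 0"
  using closure_sub \<Omega>r \<Omega>o by (force simp: frontier_def interior_open)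

lemma bound_cl:
  fixes f :: "pt \<Rightarrow> real"
  assumes "continuous_on (closure \<Omega>) f"
  obtains B where "\<And>x. x \<in> closure \<Omega> \<Longrightarrow> \<bar>f x\<bar> \<le> B"
  using compact_bound[OF compact_cl assms] by blast

lemma has_pd_rho: "has_pd i \<rho> x (D [i] x)"
  using Dd[where ks="[]" and i=i and x=x] D0 by simp

lemma grad_rho: "grad \<rho> x = gr x"
  unfolding grad_def gr_def using pd_eq[OF has_pd_rho] by simp

lemma gr_cont: "continuous_on S gr"
proof -
  have "continuous_on UNIV (\<lambda>x. \<chi> i. D [i] x)"
    by (intro continuous_on_vec_lambda) (use Dc in auto)
  then show ?thesis unfolding gr_def[abs_def] using continuous_on_subset by blast
qed

lemma hsr_cont: "continuous_on UNIV hsr"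
  using hsr_deriv DERIV_isCont continuous_at_imp_continuous_on by blast

lemma psi_cont: "continuous_on S (psi e)"
proof -
  have "continuous_on S (\<lambda>x. (-1/e) * \<rho> x - 1)"
    by (intro continuous_intros continuous_on_subset[OF rho_cont]) auto
  moreover have "(\<lambda>x. (-1/e) * \<rho> x - 1) = (\<lambda>x. - \<rho> x / e - 1)" by auto
  ultimately have "continuous_on S (\<lambda>x. - \<rho> x / e - 1)" by simp
  then show ?thesis unfolding psi_def[abs_def]
    by (rule continuous_on_compose2[OF hsr_cont]) auto
qed

lemma psi_pd: "e > 0 \<Longrightarrow> has_pd i (psi e) x (dpsi e i x)"
proof -
  assume e: "e > 0"
  have a: "has_pd i (\<lambda>y. - \<rho> y / e - 1) x (- D [i] x / e)"
  proof -
    have "has_pd i (\<lambda>y. (- 1 / e) * \<rho> y) x ((- 1 / e) * D [i] x)"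
      by (rule has_pd_cmult[OF has_pd_rho])
    from has_pd_diff[OF this has_pd_const[of i 1 x]] show ?thesis by simp
  qed
  show ?thesis unfolding psi_def[abs_def] dpsi_def
    using has_pd_comp[OF a hsr_deriv] by simp
qed

lemma psi_zero: "e > 0 \<Longrightarrow> \<rho> x \<ge> - e \<Longrightarrow> psi e x = 0"
  unfolding psi_def by (rule hsr_zero) (simp add: field_simps)

lemma psi_one: "e > 0 \<Longrightarrow> \<rho> x \<le> - 2 * e \<Longrightarrow> psi e x = 1"
  unfolding psi_def by (rule hsr_one) (simp add: field_simps)

lemma psi_abs: "\<bar>psi e x\<bar> \<le> 1"
  unfolding psi_def using hsr_bounds by (simp add: abs_le_iff)

lemma hdr_support: "e > 0 \<Longrightarrow> hdr (- \<rho> x / e - 1) \<noteq> 0 \<Longrightarrow> \<rho> x > - 2 * e"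
proof -
  assume e: "e > 0" and h: "hdr (- \<rho> x / e - 1) \<noteq> 0"
  then have "- \<rho> x / e - 1 < 1" using hdr_zero[of "- \<rho> x / e - 1"] by linarith
  then have "- \<rho> x / e < 2" by simp
  then show ?thesis using e by (simp add: field_simps)
qed

end


definition okF :: "pt set \<Rightarrow> (pt \<Rightarrow> pt) \<Rightarrow> bool" where
  "okF S F \<longleftrightarrow> (\<forall>i. \<forall>x\<in>S. has_pd i (\<lambda>y. F y $ i) x (pd i (\<lambda>y. F y $ i) x)) \<and>
     continuous_on S F \<and> (\<exists>B. \<forall>x\<in>S. norm (F x) \<le> B) \<and>
     (\<forall>i. continuous_on S (pd i (\<lambda>y. F y $ i))) \<and>
     (\<exists>B. \<forall>i. \<forall>x\<in>S. \<bar>pd i (\<lambda>y. F y $ i) x\<bar> \<le> B)"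

lemma divg_cont: "okF S F \<Longrightarrow> continuous_on S (divg F)"
  unfolding okF_def divg_def[abs_def] by (intro continuous_on_sum) auto

lemma divg_bound:
  assumes "okF S F" obtains B where "\<And>x. x \<in> S \<Longrightarrow> \<bar>divg F x\<bar> \<le> B"
proof -
  obtain B where B: "\<And>i x. x \<in> S \<Longrightarrow> \<bar>pd i (\<lambda>y. F y $ i) x\<bar> \<le> B"
    using assms unfolding okF_def by blast
  have "\<bar>divg F x\<bar> \<le> (\<Sum>i\<in>(UNIV::2 set). B)" if "x \<in> S" for x
    unfolding divg_def using B[OF that]
    by (intro order.trans[OF sum_abs] sum_mono) auto
  then show ?thesis using that by blast
qed

context dom
begin

lemma ibp_dom:
  assumes F: "okF \<Omega> F" and e: "e > 0"
  shows "(\<lambda>x. psi e x * divg F x) integrable_on \<Omega>"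
    "(\<lambda>x. hdr (- \<rho> x / e - 1) / e * (F x \<bullet> gr x)) integrable_on \<Omega>"
    "integral \<Omega> (\<lambda>x. psi e x * divg F x) = integral \<Omega> (\<lambda>x. hdr (- \<rho> x / e - 1) / e * (F x \<bullet> gr x))"
proof -
  define dF where "dF i = pd i (\<lambda>y. F y $ i)" for i
  have F1: "\<And>i x. x \<in> \<Omega> \<Longrightarrow> has_pd i (\<lambda>y. F y $ i) x (dF i x)"
    and F2: "continuous_on \<Omega> F"
    and F4: "\<And>i. continuous_on \<Omega> (dF i)"
    using F unfolding okF_def dF_def by auto
  obtain BF0 where BF0: "\<And>x. x \<in> \<Omega> \<Longrightarrow> norm (F x) \<le> BF0" using F unfolding okF_def by blast
  define BF where "BF = max BF0 0"
  have BF: "\<And>x. x \<in> \<Omega> \<Longrightarrow> norm (F x) \<le> BF" and BFp: "0 \<le> BF"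
    using BF0 by (auto simp: BF_def le_max_iff_disj)
  obtain BD0 where BD0: "\<And>i x. x \<in> \<Omega> \<Longrightarrow> \<bar>dF i x\<bar> \<le> BD0" using F unfolding okF_def dF_def by blast
  define BD where "BD = max BD0 0"
  have BD: "\<And>i x. x \<in> \<Omega> \<Longrightarrow> \<bar>dF i x\<bar> \<le> BD" and BDp: "0 \<le> BD"
    using BD0 by (auto simp: BD_def le_max_iff_disj)
  obtain Bg0 where Bg0: "\<And>x. x \<in> closure \<Omega> \<Longrightarrow> \<bar>\<Sum>j\<in>UNIV. \<bar>D [j] x\<bar>\<bar> \<le> Bg0"
  proof -
    have "continuous_on (closure \<Omega>) (\<lambda>x. \<Sum>j\<in>UNIV. \<bar>D [j] x\<bar>)"
      by (intro continuous_intros continuous_on_subset[OF Dc subset_UNIV])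
    from bound_cl[OF this] that show ?thesis by blast
  qed
  define Bg where "Bg = max Bg0 0"
  have Bg: "\<And>i x. x \<in> closure \<Omega> \<Longrightarrow> \<bar>D [i] x\<bar> \<le> Bg" and Bgp: "0 \<le> Bg"
  proof -
    fix i x assume x: "x \<in> closure \<Omega>"
    have "\<bar>D [i] x\<bar> \<le> (\<Sum>j\<in>UNIV. \<bar>D [j] x\<bar>)"
      by (rule member_le_sum) auto
    then show "\<bar>D [i] x\<bar> \<le> Bg" using Bg0[OF x] unfolding Bg_def by linarith
  qed (simp add: Bg_def)
  define U where "U = {x. - e < \<rho> x}"
  have Uo: "open U" unfolding U_def
    by (rule open_Collect_less) (use rho_cont in \<open>auto intro: continuous_intros continuous_on_subset\<close>)
  have OU: "\<Omega> \<union> U = UNIV" using e unfolding U_def \<Omega>r by auto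
  have psi0U: "psi e y = 0" if "y \<in> U" for y
    using psi_zero[OF e] that unfolding U_def by simp
  define G where "G i x = (if x \<in> \<Omega> then psi e x * F x $ i else 0)" for i x
  define g where "g i x = (if x \<in> \<Omega> then dpsi e i x * F x $ i + psi e x * dF i x else 0)" for i x
  define K where "K = {x. \<rho> x \<le> - e}"
  have KO: "K \<subseteq> \<Omega>" unfolding K_def \<Omega>r using e by auto
  have Kc: "compact K"
  proof -
    have "closed K" unfolding K_def
      by (rule closed_Collect_le) (use rho_cont in \<open>auto intro: continuous_intros continuous_on_subset\<close>)
    moreover have "bounded K" using KO \<Omega>b bounded_subset by blast
    ultimately show ?thesis using compact_eq_bounded_closed by blast
  qed
  have gi: "g i integrable_on UNIV \<and> integral UNIV (g i) = 0" for i
  proof (rule ibp_compact[where K=K and G="G i" and i=i])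
    have c1: "continuous_on \<Omega> (G i)"
    proof (rule continuous_on_eq)
      show "continuous_on \<Omega> (\<lambda>x. psi e x * F x $ i)"
        by (intro continuous_intros psi_cont F2)
    qed (auto simp: G_def)
    have c2: "continuous_on U (G i)"
      by (rule continuous_on_eq[of U "\<lambda>x. 0"]) (auto simp: G_def psi0U)
    show "continuous_on UNIV (G i)"
      using continuous_on_open_Un[OF \<Omega>o Uo c1 c2] OU by simp
    show "compact K" by (rule Kc)
    show "G i x = 0" if "x \<notin> K" for x
      using that psi_zero[OF e, of x] unfolding G_def K_def by auto
    show "has_pd i (G i) x (g i x)" for x
    proof (cases "x \<in> \<Omega>")
      case True
      have "has_pd i (\<lambda>y. psi e y * F y $ i) x (dpsi e i x * F x $ i + psi e x * dF i x)"
        by (rule has_pd_mult[OF psi_pd[OF e] F1[OF True]])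
      then have "has_pd i (G i) x (dpsi e i x * F x $ i + psi e x * dF i x)"
        by (rule has_pd_local[OF _ \<Omega>o True]) (auto simp: G_def)
      then show ?thesis using True by (simp add: g_def)
    next
      case False
      then have xU: "x \<in> U" using OU by auto
      have "has_pd i (G i) x 0"
        by (rule has_pd_local[OF has_pd_const Uo xU]) (auto simp: G_def psi0U)
      then show ?thesis using False by (simp add: g_def)
    qed
    show "\<bar>g i x\<bar> \<le> 2 * Bg / e * BF + BD" for x
    proof (cases "x \<in> \<Omega>")
      case True
      have "\<bar>dpsi e i x\<bar> = hdr (- \<rho> x / e - 1) * \<bar>D [i] x\<bar> / e"
        unfolding dpsi_def using e hdr_nonneg by (simp add: abs_mult)
      also have "\<dots> \<le> 2 * Bg / e"
        using e hdr_le hdr_nonneg Bg[of x i] True closure_subset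
        by (intro divide_right_mono mult_mono) auto
      finally have a: "\<bar>dpsi e i x\<bar> \<le> 2 * Bg / e" .
      have b: "\<bar>F x $ i\<bar> \<le> BF" using BF[OF True] component_le_norm_cart[of "F x" i] by linarith
      have c: "\<bar>psi e x * dF i x\<bar> \<le> BD"
      proof -
        have "\<bar>psi e x\<bar> * \<bar>dF i x\<bar> \<le> 1 * BD"
          by (rule mult_mono) (use psi_abs[of e x] BD[OF True, of i] in auto)
        then show ?thesis by (simp add: abs_mult)
      qed
        
      have "\<bar>g i x\<bar> \<le> \<bar>dpsi e i x\<bar> * \<bar>F x $ i\<bar> + \<bar>psi e x * dF i x\<bar>"
        using True unfolding g_def by (simp add: abs_mult[symmetric] abs_triangle_ineq)
      also have "\<dots> \<le> 2 * Bg / e * BF + BD"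
        using a b c by (intro add_mono mult_mono) auto
      finally show ?thesis .
    next
      case False
      show ?thesis using False e BFp BDp Bgp by (simp add: g_def)
    qed
  qed
  define S where "S x = psi e x * divg F x - hdr (- \<rho> x / e - 1) / e * (F x \<bullet> gr x)" for x
  have sI: "(\<lambda>x. \<Sum>i\<in>UNIV. g i x) integrable_on UNIV"
    by (rule integrable_sum) (use gi in auto)
  have s0: "integral UNIV (\<lambda>x. \<Sum>i\<in>UNIV. g i x) = 0"
    by (subst integral_sum) (use gi in auto)
  have eqS: "(\<lambda>x. \<Sum>i\<in>UNIV. g i x) = (\<lambda>x. if x \<in> \<Omega> then S x else 0)"
  proof
    fix x
    show "(\<Sum>i\<in>UNIV. g i x) = (if x \<in> \<Omega> then S x else 0)"
    proof (cases "x \<in> \<Omega>")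
      case True
      have "(\<Sum>i\<in>UNIV. g i x) = (\<Sum>i\<in>UNIV. dpsi e i x * F x $ i) + psi e x * (\<Sum>i\<in>UNIV. dF i x)"
        using True by (simp add: g_def sum.distrib sum_distrib_left)
      also have "(\<Sum>i\<in>UNIV. dpsi e i x * F x $ i) = - (hdr (- \<rho> x / e - 1) / e) * (\<Sum>i\<in>UNIV. F x $ i * gr x $ i)"
        unfolding dpsi_def gr_def by (simp add: sum_distrib_left algebra_simps)
      also have "(\<Sum>i\<in>UNIV. F x $ i * gr x $ i) = F x \<bullet> gr x"
        by (simp add: inner_vec_def)
      also have "(\<Sum>i\<in>UNIV. dF i x) = divg F x"
        by (simp add: divg_def dF_def)
      finally show ?thesis using True by (simp add: S_def)
    qed (simp add: g_def)
  qed
  have SI: "S integrable_on \<Omega>" using sI unfolding eqS integrable_restrict_UNIV .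
  have S0: "integral \<Omega> S = 0" using s0 unfolding eqS integral_restrict_UNIV .
  obtain BB where BB: "\<And>x. x \<in> \<Omega> \<Longrightarrow> \<bar>divg F x\<bar> \<le> BB" using divg_bound[OF F] by blast
  show pI: "(\<lambda>x. psi e x * divg F x) integrable_on \<Omega>"
  proof (rule cont_bdd_integrable(2)[OF lmeas])
    show "continuous_on \<Omega> (\<lambda>x. psi e x * divg F x)"
      by (intro continuous_intros psi_cont divg_cont[OF F])
    fix x assume x: "x \<in> \<Omega>"
    have "\<bar>psi e x\<bar> * \<bar>divg F x\<bar> \<le> 1 * \<bar>divg F x\<bar>"
      by (rule mult_right_mono) (use psi_abs in auto)
    then show "\<bar>psi e x * divg F x\<bar> \<le> BB" using BB[OF x] by (simp add: abs_mult)
  qed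
  have eqH: "(\<lambda>x. hdr (- \<rho> x / e - 1) / e * (F x \<bullet> gr x)) = (\<lambda>x. psi e x * divg F x - S x)"
    by (simp add: S_def)
  show "(\<lambda>x. hdr (- \<rho> x / e - 1) / e * (F x \<bullet> gr x)) integrable_on \<Omega>"
    unfolding eqH by (rule integrable_diff[OF pI SI])
  show "integral \<Omega> (\<lambda>x. psi e x * divg F x) = integral \<Omega> (\<lambda>x. hdr (- \<rho> x / e - 1) / e * (F x \<bullet> gr x))"
    unfolding eqH by (subst integral_diff[OF pI SI]) (simp add: S0)
qed

end


context dom
begin

lemma bound_on:
  fixes f :: "pt \<Rightarrow> real"
  assumes "continuous_on UNIV f"
  obtains B where "\<And>x. x \<in> \<Omega> \<Longrightarrow> \<bar>f x\<bar> \<le> B" "0 \<le> B"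
proof -
  obtain B where B: "\<And>x. x \<in> closure \<Omega> \<Longrightarrow> \<bar>f x\<bar> \<le> B"
    using bound_cl[OF continuous_on_subset[OF assms subset_UNIV]] by blast
  show ?thesis
    by (rule that[of "max B 0"]) (use B closure_subset in \<open>force simp: le_max_iff_disj\<close>)+
qed

lemma unif:
  assumes F: "okF \<Omega> F"
    and bdry: "\<And>x. x \<in> frontier \<Omega> \<Longrightarrow> ((\<lambda>y. F y \<bullet> gr x) \<longlongrightarrow> 0) (at x within \<Omega>)"
    and eta: "\<eta> > 0"
  shows "\<exists>\<delta>>0. \<forall>x\<in>\<Omega>. \<rho> x > - \<delta> \<longrightarrow> \<bar>F x \<bullet> gr x\<bar> \<le> \<eta> * (gr x \<bullet> gr x)"
proof (rule ccontr)
  assume "\<not> ?thesis"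
  then have "\<forall>k::nat. \<exists>x. x \<in> \<Omega> \<and> \<rho> x > - (1 / real (Suc k)) \<and> \<bar>F x \<bullet> gr x\<bar> > \<eta> * (gr x \<bullet> gr x)"
    by (metis not_le of_nat_0_less_iff zero_less_Suc zero_less_divide_1_iff)
  then obtain X where X: "\<And>k. X k \<in> \<Omega>" "\<And>k. \<rho> (X k) > - (1 / real (Suc k))"
      "\<And>k. \<bar>F (X k) \<bullet> gr (X k)\<bar> > \<eta> * (gr (X k) \<bullet> gr (X k))"
    by metis
  obtain BF where BF: "\<And>x. x \<in> \<Omega> \<Longrightarrow> norm (F x) \<le> BF" using F unfolding okF_def by blast
  have "\<forall>k. X k \<in> closure \<Omega>" using X(1) closure_subset by blast
  then obtain l r where l: "l \<in> closure \<Omega>" and r: "strict_mono r" and lim: "(X \<circ> r) \<longlonglongrightarrow> l"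
    using seq_compactE[OF compact_imp_seq_compact[OF compact_cl]] by metis
  have rhoX: "(\<lambda>k. \<rho> (X k)) \<longlonglongrightarrow> 0"
  proof (rule Lim_null_comparison)
    show "\<forall>\<^sub>F k in sequentially. norm (\<rho> (X k)) \<le> 1 / real (Suc k)"
    proof (rule always_eventually, rule allI)
      fix k
      have a: "\<rho> (X k) < 0" using X(1) \<Omega>r by auto
      show "norm (\<rho> (X k)) \<le> 1 / real (Suc k)"
        unfolding real_norm_def abs_le_iff using a X(2)[of k] by linarith
    qed
    show "(\<lambda>k. 1 / real (Suc k)) \<longlonglongrightarrow> 0"
      using LIMSEQ_Suc[OF lim_1_over_n] by simp
  qed
  have isc: "isCont \<rho> x" for x using rho_cont continuous_on_eq_continuous_at by blast
  have "(\<lambda>k. \<rho> ((X \<circ> r) k)) \<longlonglongrightarrow> \<rho> l" by (rule isCont_tendsto_compose[OF isc lim])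
  moreover have "(\<lambda>k. \<rho> ((X \<circ> r) k)) \<longlonglongrightarrow> 0"
    using LIMSEQ_subseq_LIMSEQ[OF rhoX r] by (simp add: o_def)
  ultimately have rl: "\<rho> l = 0" using LIMSEQ_unique by blast
  then have lO: "l \<notin> \<Omega>" using \<Omega>r by auto
  have lf: "l \<in> frontier \<Omega>" using l lO \<Omega>o by (simp add: frontier_def interior_open)
  have "\<forall>i. (X \<circ> r) i \<in> \<Omega> - {l}" using X(1) lO by auto
  then have t1: "((\<lambda>y. F y \<bullet> gr l) \<circ> (X \<circ> r)) \<longlonglongrightarrow> 0"
    using bdry[OF lf] lim unfolding tendsto_at_iff_sequentially by blast
  have iscg: "isCont gr x" for x using gr_cont[of UNIV] continuous_on_eq_continuous_at by blast
  have grl: "(\<lambda>k. gr ((X \<circ> r) k)) \<longlonglongrightarrow> gr l" by (rule isCont_tendsto_compose[OF iscg lim])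
  have t2: "(\<lambda>k. F ((X \<circ> r) k) \<bullet> gr ((X \<circ> r) k) - F ((X \<circ> r) k) \<bullet> gr l) \<longlonglongrightarrow> 0"
  proof (rule Lim_null_comparison)
    show "\<forall>\<^sub>F k in sequentially. norm (F ((X \<circ> r) k) \<bullet> gr ((X \<circ> r) k) - F ((X \<circ> r) k) \<bullet> gr l)
        \<le> BF * norm (gr ((X \<circ> r) k) - gr l)"
    proof (rule always_eventually, rule allI)
      fix k
      have "norm (F ((X \<circ> r) k) \<bullet> gr ((X \<circ> r) k) - F ((X \<circ> r) k) \<bullet> gr l)
          = \<bar>F ((X \<circ> r) k) \<bullet> (gr ((X \<circ> r) k) - gr l)\<bar>" by (simp add: inner_diff_right)
      also have "\<dots> \<le> norm (F ((X \<circ> r) k)) * norm (gr ((X \<circ> r) k) - gr l)"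
        by (rule Cauchy_Schwarz_ineq2)
      also have "\<dots> \<le> BF * norm (gr ((X \<circ> r) k) - gr l)"
        using BF X(1) by (intro mult_right_mono) auto
      finally show "norm (F ((X \<circ> r) k) \<bullet> gr ((X \<circ> r) k) - F ((X \<circ> r) k) \<bullet> gr l)
          \<le> BF * norm (gr ((X \<circ> r) k) - gr l)" .
    qed
    have "(\<lambda>k. norm (gr ((X \<circ> r) k) - gr l)) \<longlonglongrightarrow> 0"
      using tendsto_norm_zero[OF LIM_zero[OF grl]] .
    then show "(\<lambda>k. BF * norm (gr ((X \<circ> r) k) - gr l)) \<longlonglongrightarrow> 0"
      using tendsto_mult_right_zero by blast
  qed
  have t3: "(\<lambda>k. \<bar>F ((X \<circ> r) k) \<bullet> gr ((X \<circ> r) k)\<bar>) \<longlonglongrightarrow> 0"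
  proof -
    have "(\<lambda>k. (F ((X \<circ> r) k) \<bullet> gr ((X \<circ> r) k) - F ((X \<circ> r) k) \<bullet> gr l) + F ((X \<circ> r) k) \<bullet> gr l) \<longlonglongrightarrow> 0 + 0"
      using tendsto_add[OF t2 t1[unfolded comp_def]] by (simp add: comp_def)
    then show ?thesis using tendsto_rabs_zero by force
  qed
  have gl: "gr l \<noteq> 0" using ng[OF rl] by (simp add: gr_def)
  define c where "c = \<eta> * (gr l \<bullet> gr l)"
  have c: "c > 0" unfolding c_def using eta gl by simp
  have t4: "(\<lambda>k. \<eta> * (gr ((X \<circ> r) k) \<bullet> gr ((X \<circ> r) k))) \<longlonglongrightarrow> c"
    unfolding c_def by (intro tendsto_intros grl)
  have e1: "\<forall>\<^sub>F k in sequentially. \<bar>F ((X \<circ> r) k) \<bullet> gr ((X \<circ> r) k)\<bar> < c / 2"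
    by (rule order_tendstoD(2)[OF t3]) (use c in simp)
  have e2: "\<forall>\<^sub>F k in sequentially. c / 2 < \<eta> * (gr ((X \<circ> r) k) \<bullet> gr ((X \<circ> r) k))"
    by (rule order_tendstoD(1)[OF t4]) (use c in simp)
  obtain N where N: "\<forall>k\<ge>N. \<bar>F ((X \<circ> r) k) \<bullet> gr ((X \<circ> r) k)\<bar> < c / 2 \<and>
      c / 2 < \<eta> * (gr ((X \<circ> r) k) \<bullet> gr ((X \<circ> r) k))"
    using eventually_conj[OF e1 e2] unfolding eventually_sequentially by blast
  then have "\<bar>F (X (r N)) \<bullet> gr (X (r N))\<bar> < \<eta> * (gr (X (r N)) \<bullet> gr (X (r N)))"
    by force
  then show False using X(3)[of "r N"] by linarith
qed

end


context dom
begin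

lemma gr_comp_pd: "pd i (\<lambda>y. gr y $ i) x = D [i, i] x"
  and gr_comp_has_pd: "has_pd i (\<lambda>y. gr y $ i) x (D [i, i] x)"
proof -
  have "has_pd i (D [i]) x (D [i, i] x)" using Dd by blast
  then show h: "has_pd i (\<lambda>y. gr y $ i) x (D [i, i] x)" by (simp add: gr_def)
  show "pd i (\<lambda>y. gr y $ i) x = D [i, i] x" using pd_eq[OF h] .
qed

lemma okF_gr: "okF \<Omega> gr"
proof -
  obtain B1 where B1: "\<And>x. x \<in> \<Omega> \<Longrightarrow> \<bar>norm (gr x)\<bar> \<le> B1"
    using bound_on[of "\<lambda>x. norm (gr x)"] gr_cont[of UNIV] by (metis continuous_on_norm)
  obtain B2 where B2: "\<And>x. x \<in> \<Omega> \<Longrightarrow> \<bar>\<Sum>j\<in>UNIV. \<bar>D [j, j] x\<bar>\<bar> \<le> B2"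
  proof -
    have "continuous_on UNIV (\<lambda>x. \<Sum>j\<in>UNIV. \<bar>D [j, j] x\<bar>)"
      by (intro continuous_intros Dc)
    from bound_on[OF this] that show ?thesis by blast
  qed
  have pdc: "pd i (\<lambda>y. gr y $ i) = D [i, i]" for i using gr_comp_pd by blast
  show ?thesis unfolding okF_def
  proof (intro conjI allI ballI)
    show "has_pd i (\<lambda>y. gr y $ i) x (pd i (\<lambda>y. gr y $ i) x)" for i x
      using gr_comp_has_pd gr_comp_pd by simp
    show "continuous_on \<Omega> gr" by (rule gr_cont)
    show "\<exists>B. \<forall>x\<in>\<Omega>. norm (gr x) \<le> B" using B1 by force
    show "continuous_on \<Omega> (pd i (\<lambda>y. gr y $ i))" for i
      unfolding pdc using Dc continuous_on_subset by blast
    show "\<exists>B. \<forall>i. \<forall>x\<in>\<Omega>. \<bar>pd i (\<lambda>y. gr y $ i) x\<bar> \<le> B"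
    proof (intro exI allI ballI)
      fix i x assume x: "x \<in> \<Omega>"
      have "\<bar>D [i, i] x\<bar> \<le> (\<Sum>j\<in>UNIV. \<bar>D [j, j] x\<bar>)" by (rule member_le_sum) auto
      then show "\<bar>pd i (\<lambda>y. gr y $ i) x\<bar> \<le> B2" using B2[OF x] unfolding pdc by linarith
    qed
  qed
qed

lemma div_zero:
  assumes F: "okF \<Omega> F"
    and bdry: "\<And>x. x \<in> frontier \<Omega> \<Longrightarrow> ((\<lambda>y. F y \<bullet> gr x) \<longlongrightarrow> 0) (at x within \<Omega>)"
  shows "integral \<Omega> (divg F) = 0"
proof -
  obtain M where M: "\<And>x. x \<in> \<Omega> \<Longrightarrow> \<bar>divg gr x\<bar> \<le> M" using divg_bound[OF okF_gr] by blast
  define C0 where "C0 = integral \<Omega> (\<lambda>x. M)"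
  have MI: "(\<lambda>x. M) integrable_on \<Omega>" using integrable_on_const[OF lmeas] .
  have Bgr: "integral \<Omega> (\<lambda>x. hdr (- \<rho> x / e - 1) / e * (gr x \<bullet> gr x)) \<le> C0" if e: "e > 0" for e
  proof -
    have "integral \<Omega> (\<lambda>x. hdr (- \<rho> x / e - 1) / e * (gr x \<bullet> gr x)) = integral \<Omega> (\<lambda>x. psi e x * divg gr x)"
      using ibp_dom(3)[OF okF_gr e] by simp
    also have "\<dots> \<le> C0" unfolding C0_def
    proof (rule integral_le[OF ibp_dom(1)[OF okF_gr e] MI])
      fix x assume x: "x \<in> \<Omega>"
      have "\<bar>psi e x\<bar> * \<bar>divg gr x\<bar> \<le> 1 * \<bar>divg gr x\<bar>"
        by (rule mult_right_mono) (use psi_abs in auto)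
      then have a: "\<bar>psi e x * divg gr x\<bar> \<le> M" using M[OF x] by (simp add: abs_mult)
      show "psi e x * divg gr x \<le> M" using a abs_ge_self[of "psi e x * divg gr x"] by linarith
    qed
    finally show ?thesis .
  qed
  obtain BB where BB: "\<And>x. x \<in> \<Omega> \<Longrightarrow> \<bar>divg F x\<bar> \<le> BB" using divg_bound[OF F] by blast
  define ek where "ek k = 1 / real (Suc k)" for k
  have ek: "ek k > 0" for k by (simp add: ek_def)
  have eklim: "ek \<longlonglongrightarrow> 0" unfolding ek_def using LIMSEQ_Suc[OF lim_1_over_n] by simp
  define A where "A k = integral \<Omega> (\<lambda>x. psi (ek k) x * divg F x)" for k
  have Alim: "A \<longlonglongrightarrow> integral \<Omega> (divg F)"
  proof -
    have "(\<lambda>k. integral \<Omega> (\<lambda>x. psi (ek k) x * divg F x)) \<longlonglongrightarrow> integral \<Omega> (divg F)"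
    proof (rule dominated_convergence(2)[where h="\<lambda>x. BB"])
      show "(\<lambda>x. psi (ek k) x * divg F x) integrable_on \<Omega>" for k using ibp_dom(1)[OF F ek] .
      show "(\<lambda>x. BB) integrable_on \<Omega>" using integrable_on_const[OF lmeas] .
      show "norm (psi (ek k) x * divg F x) \<le> BB" if "x \<in> \<Omega>" for k x
      proof -
        have "\<bar>psi (ek k) x\<bar> * \<bar>divg F x\<bar> \<le> 1 * \<bar>divg F x\<bar>"
          by (rule mult_right_mono) (use psi_abs in auto)
        then show ?thesis using BB[OF that] by (simp add: abs_mult)
      qed
      show "(\<lambda>k. psi (ek k) x * divg F x) \<longlonglongrightarrow> divg F x" if x: "x \<in> \<Omega>" for x
      proof (rule tendsto_eventually)
        have rx: "- \<rho> x / 2 > 0" using x \<Omega>r by auto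
        have "\<forall>\<^sub>F k in sequentially. ek k < - \<rho> x / 2"
          using order_tendstoD(2)[OF eklim rx] .
        then show "\<forall>\<^sub>F k in sequentially. psi (ek k) x * divg F x = divg F x"
        proof (rule eventually_mono)
          fix k assume "ek k < - \<rho> x / 2"
          then have "\<rho> x \<le> - 2 * ek k" by linarith
          then show "psi (ek k) x * divg F x = divg F x" using psi_one[OF ek] by simp
        qed
      qed
    qed
    then show ?thesis unfolding A_def .
  qed
  have small: "\<bar>integral \<Omega> (divg F)\<bar> \<le> \<eta> * C0" if eta: "\<eta> > 0" for \<eta>
  proof -
    obtain \<delta> where d: "\<delta> > 0" and dd: "\<And>x. x \<in> \<Omega> \<Longrightarrow> \<rho> x > - \<delta> \<Longrightarrow> \<bar>F x \<bullet> gr x\<bar> \<le> \<eta> * (gr x \<bullet> gr x)"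
      using unif[OF F bdry eta] by blast
    have "\<forall>\<^sub>F k in sequentially. ek k < \<delta> / 2"
      by (rule order_tendstoD(2)[OF eklim]) (use d in simp)
    then have ev: "\<forall>\<^sub>F k in sequentially. \<bar>A k\<bar> \<le> \<eta> * C0"
    proof (rule eventually_mono)
      fix k assume k: "ek k < \<delta> / 2"
      let ?e = "ek k"
      have e: "?e > 0" by (rule ek)
      have "A k = integral \<Omega> (\<lambda>x. hdr (- \<rho> x / ?e - 1) / ?e * (F x \<bullet> gr x))"
        unfolding A_def using ibp_dom(3)[OF F e] .
      also have "\<bar>\<dots>\<bar> \<le> integral \<Omega> (\<lambda>x. \<eta> * (hdr (- \<rho> x / ?e - 1) / ?e * (gr x \<bullet> gr x)))"
      proof -
        have "norm (integral \<Omega> (\<lambda>x. hdr (- \<rho> x / ?e - 1) / ?e * (F x \<bullet> gr x)))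
          \<le> integral \<Omega> (\<lambda>x. \<eta> * (hdr (- \<rho> x / ?e - 1) / ?e * (gr x \<bullet> gr x)))"
      proof (rule integral_norm_bound_integral)
        show "(\<lambda>x. hdr (- \<rho> x / ?e - 1) / ?e * (F x \<bullet> gr x)) integrable_on \<Omega>" using ibp_dom(2)[OF F e] .
        show "(\<lambda>x. \<eta> * (hdr (- \<rho> x / ?e - 1) / ?e * (gr x \<bullet> gr x))) integrable_on \<Omega>"
          using integrable_on_cmult_left[OF ibp_dom(2)[OF okF_gr e], of \<eta>] by simp
        fix x assume x: "x \<in> \<Omega>"
        show "norm (hdr (- \<rho> x / ?e - 1) / ?e * (F x \<bullet> gr x)) \<le> \<eta> * (hdr (- \<rho> x / ?e - 1) / ?e * (gr x \<bullet> gr x))"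
        proof (cases "hdr (- \<rho> x / ?e - 1) = 0")
          case True then show ?thesis by simp
        next
          case False
          then have "\<rho> x > - 2 * ?e" using hdr_support[OF e] by blast
          then have "\<rho> x > - \<delta>" using k by linarith
          then have le: "\<bar>F x \<bullet> gr x\<bar> \<le> \<eta> * (gr x \<bullet> gr x)" using dd[OF x] by blast
          have nn: "0 \<le> hdr (- \<rho> x / ?e - 1) / ?e" using hdr_nonneg e by simp
          have "norm (hdr (- \<rho> x / ?e - 1) / ?e * (F x \<bullet> gr x)) = hdr (- \<rho> x / ?e - 1) / ?e * \<bar>F x \<bullet> gr x\<bar>"
            using nn by (simp only: real_norm_def abs_mult abs_of_nonneg)
          also have "\<dots> \<le> hdr (- \<rho> x / ?e - 1) / ?e * (\<eta> * (gr x \<bullet> gr x))"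
            by (rule mult_left_mono[OF le nn])
          finally show ?thesis by (simp add: algebra_simps)
        qed
      qed
      then show ?thesis by simp
      qed
      also have "\<dots> = \<eta> * integral \<Omega> (\<lambda>x. hdr (- \<rho> x / ?e - 1) / ?e * (gr x \<bullet> gr x))"
        by simp
      also have "\<dots> \<le> \<eta> * C0" using Bgr[OF e] eta by (intro mult_left_mono) auto
      finally show "\<bar>A k\<bar> \<le> \<eta> * C0" .
    qed
    show ?thesis
      by (rule tendsto_upperbound[OF tendsto_rabs[OF Alim] ev]) simp
  qed
  show ?thesis
  proof (rule ccontr)
    let ?I = "integral \<Omega> (divg F)"
    assume "?I \<noteq> 0"
    then have pos: "\<bar>?I\<bar> > 0" by simp
    define \<eta> where "\<eta> = \<bar>?I\<bar> / (2 * (\<bar>C0\<bar> + 1))"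
    have eta: "\<eta> > 0" unfolding \<eta>_def using pos by (simp add: add_pos_nonneg)
    have "\<eta> * C0 \<le> \<eta> * (\<bar>C0\<bar> + 1)" using eta by (intro mult_left_mono) auto
    also have "\<dots> = \<bar>?I\<bar> / 2" unfolding \<eta>_def by (simp add: field_simps)
    finally show False using small[OF eta] pos by linarith
  qed
qed

end


lemma param_cont:
  fixes P :: "pt \<Rightarrow> real \<Rightarrow> real"
  assumes S: "S \<in> lmeasurable" and C: "compact C" "S \<subseteq> C" and T: "compact T"
    and Pc: "continuous_on (C \<times> T) (\<lambda>(x, s). P x s)"
  shows "continuous_on T (\<lambda>s. integral S (\<lambda>x. P x s))"
proof (rule continuous_on_sequentiallyI)
  obtain B where B: "\<And>z. z \<in> C \<times> T \<Longrightarrow> \<bar>(\<lambda>(x, s). P x s) z\<bar> \<le> B"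
    using compact_bound[OF compact_Times[OF C(1) T] Pc] by blast
  fix u a assume u: "\<forall>n. u n \<in> T" and a: "a \<in> T" and ua: "u \<longlonglongrightarrow> a"
  show "(\<lambda>n. integral S (\<lambda>x. P x (u n))) \<longlonglongrightarrow> integral S (\<lambda>x. P x a)"
  proof (rule dominated_convergence(2)[where h="\<lambda>x. B"])
    fix n
    show "(\<lambda>x. P x (u n)) integrable_on S"
    proof (rule cont_bdd_integrable(2)[OF S])
      have "continuous_on S (\<lambda>x. (\<lambda>(x, s). P x s) (x, u n))"
        by (rule continuous_on_compose2[OF Pc]) (use u C in \<open>auto intro!: continuous_intros\<close>)
      then show "continuous_on S (\<lambda>x. P x (u n))" by simp
      show "\<bar>P x (u n)\<bar> \<le> B" if "x \<in> S" for x using B[of "(x, u n)"] that u C by auto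
    qed
  next
    show "(\<lambda>x. B) integrable_on S" using integrable_on_const[OF S] .
  next
    fix n x assume "x \<in> S"
    then show "norm (P x (u n)) \<le> B" using B[of "(x, u n)"] u C by auto
  next
    fix x assume x: "x \<in> S"
    have "((\<lambda>n. (\<lambda>(x, s). P x s) (x, u n)) \<longlongrightarrow> (\<lambda>(x, s). P x s) (x, a)) sequentially"
      by (rule continuous_on_tendsto_compose[OF Pc]) (use x C a u ua in \<open>auto intro!: tendsto_intros\<close>)
    then show "(\<lambda>n. P x (u n)) \<longlonglongrightarrow> P x a" by simp
  qed
qed

lemma param_deriv:
  fixes f f' :: "pt \<Rightarrow> real \<Rightarrow> real"
  assumes S: "S \<in> lmeasurable" and ab: "a < t" "t < b"
    and d: "\<And>x s. x \<in> S \<Longrightarrow> a < s \<Longrightarrow> s < b \<Longrightarrow> ((\<lambda>s. f x s) has_real_derivative f' x s) (at s)"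
    and B: "\<And>x s. x \<in> S \<Longrightarrow> a < s \<Longrightarrow> s < b \<Longrightarrow> \<bar>f' x s\<bar> \<le> B"
    and fi: "\<And>s. a < s \<Longrightarrow> s < b \<Longrightarrow> (\<lambda>x. f x s) integrable_on S"
  shows "((\<lambda>s. integral S (\<lambda>x. f x s)) has_real_derivative integral S (\<lambda>x. f' x t)) (at t)"
proof -
  define Fn where "Fn s = integral S (\<lambda>x. f x s)" for s
  define q where "q h = (Fn (t + h) - Fn t) / h" for h
  have "(q \<longlongrightarrow> integral S (\<lambda>x. f' x t)) (at 0)"
    unfolding tendsto_at_iff_sequentially
  proof (intro allI impI)
    fix X :: "nat \<Rightarrow> real" assume X0: "\<forall>i. X i \<in> UNIV - {0}" and X: "X \<longlonglongrightarrow> 0"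
    define \<delta> where "\<delta> = min (t - a) (b - t)"
    have dp: "\<delta> > 0" using ab by (simp add: \<delta>_def)
    obtain N where N: "\<And>i. i \<ge> N \<Longrightarrow> norm (X i - 0) < \<delta>"
      using X dp unfolding LIMSEQ_iff by blast
    define Y where "Y i = X (i + N)" for i
    have Y0: "Y i \<noteq> 0" for i using X0 by (simp add: Y_def)
    have Yr: "a < t + Y i" "t + Y i < b" for i
      using N[of "i + N"] unfolding Y_def \<delta>_def by auto
    have Ylim: "Y \<longlonglongrightarrow> 0" using X unfolding Y_def by (rule LIMSEQ_ignore_initial_segment[of X 0 N, simplified])
    define fk where "fk i x = (f x (t + Y i) - f x t) / Y i" for i x
    have qY: "q (Y i) = integral S (fk i)" for i
    proof -
      have "integral S (fk i) = integral S (\<lambda>x. (1 / Y i) * (f x (t + Y i) - f x t))"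
        unfolding fk_def by simp
      also have "\<dots> = (1 / Y i) * (Fn (t + Y i) - Fn t)"
        unfolding Fn_def by (simp add: integral_diff fi Yr ab)
      finally show ?thesis unfolding q_def by simp
    qed
    have dc: "(\<lambda>i. integral S (fk i)) \<longlonglongrightarrow> integral S (\<lambda>x. f' x t)"
    proof (rule dominated_convergence(2)[where h="\<lambda>x. B"])
      fix i
      show "fk i integrable_on S"
        unfolding fk_def using integrable_on_cmult_left[OF integrable_diff[OF fi[OF Yr(1,2)] fi[OF ab]], of "1 / Y i"]
        by simp
      show "(\<lambda>x. B) integrable_on S" using integrable_on_const[OF S] .
      fix x assume x: "x \<in> S"
      have "norm ((\<lambda>s. f x s) (t + Y i) - (\<lambda>s. f x s) t) \<le> B * norm ((t + Y i) - t)"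
      proof (rule field_differentiable_bound[where S="{a<..<b}" and f'="f' x"])
        show "((\<lambda>s. f x s) has_field_derivative f' x z) (at z within {a<..<b})" if "z \<in> {a<..<b}" for z
          using d[OF x, of z] that by (auto intro: has_field_derivative_at_within)
        show "norm (f' x z) \<le> B" if "z \<in> {a<..<b}" for z using B[OF x] that by auto
      qed (use Yr[of i] ab in auto)
      then show "norm (fk i x) \<le> B" using Y0[of i] unfolding fk_def
        by (simp add: divide_le_eq abs_mult mult.commute)
    next
      fix x assume x: "x \<in> S"
      have "((\<lambda>s. f x s) has_real_derivative f' x t) (at t)" using d[OF x ab] .
      then have "((\<lambda>h. (f x (t + h) - f x t) / h) \<longlongrightarrow> f' x t) (at 0)"
        unfolding DERIV_def .
      moreover have "\<forall>i. Y i \<in> UNIV - {0}" using Y0 by simp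
      ultimately show "(\<lambda>i. fk i x) \<longlonglongrightarrow> f' x t"
        using Ylim unfolding tendsto_at_iff_sequentially fk_def comp_def by blast
    qed
    then have "(\<lambda>i. (q \<circ> X) (i + N)) \<longlonglongrightarrow> integral S (\<lambda>x. f' x t)"
      using qY unfolding Y_def comp_def by simp
    then show "(q \<circ> X) \<longlonglongrightarrow> integral S (\<lambda>x. f' x t)" by (rule LIMSEQ_offset)
  qed
  then show ?thesis unfolding DERIV_def q_def Fn_def by simp
qed


lemma unif_bound_fin:
  fixes f :: "'i::finite \<Rightarrow> 'a \<Rightarrow> real"
  assumes "\<And>i. \<exists>B. \<forall>x\<in>S. \<bar>f i x\<bar> \<le> B"
  shows "\<exists>B. \<forall>i. \<forall>x\<in>S. \<bar>f i x\<bar> \<le> B"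
proof -
  obtain B where B: "\<And>i. \<forall>x\<in>S. \<bar>f i x\<bar> \<le> B i" using assms by metis
  have "\<bar>f i x\<bar> \<le> (\<Sum>j\<in>UNIV. \<bar>B j\<bar>)" if "x \<in> S" for i x
  proof -
    have "\<bar>f i x\<bar> \<le> \<bar>B i\<bar>" using B[of i] that by force
    also have "\<dots> \<le> (\<Sum>j\<in>UNIV. \<bar>B j\<bar>)" by (rule member_le_sum) auto
    finally show ?thesis .
  qed
  then show ?thesis by blast
qed

lemma ext_cont_facts:
  assumes E: "ext_cont \<Omega> F" and t: "t > 0" and b: "bounded \<Omega>"
  shows "continuous_on \<Omega> (\<lambda>x. F x t)" "\<exists>B. \<forall>x\<in>\<Omega>. \<bar>F x t\<bar> \<le> B"
    "\<exists>G. continuous_on (closure \<Omega>) G \<and> (\<forall>x\<in>\<Omega>. G x = F x t)"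
proof -
  obtain G where G: "continuous_on (closure \<Omega> \<times> {0<..}) G" "\<And>x t. x \<in> \<Omega> \<Longrightarrow> t > 0 \<Longrightarrow> G (x, t) = F x t"
    using E unfolding ext_cont_def by blast
  have c: "continuous_on (closure \<Omega>) (\<lambda>x. G (x, t))"
    by (rule continuous_on_compose2[OF G(1)]) (use t in \<open>auto intro!: continuous_intros\<close>)
  show "\<exists>G. continuous_on (closure \<Omega>) G \<and> (\<forall>x\<in>\<Omega>. G x = F x t)"
    using c G(2) t by blast
  show "continuous_on \<Omega> (\<lambda>x. F x t)"
    using continuous_on_subset[OF c closure_subset] by (rule continuous_on_eq) (use G(2) t in auto)
  obtain B where "\<And>x. x \<in> closure \<Omega> \<Longrightarrow> \<bar>G (x, t)\<bar> \<le> B"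
    using compact_bound[OF _ c] b by (metis compact_closure)
  then show "\<exists>B. \<forall>x\<in>\<Omega>. \<bar>F x t\<bar> \<le> B" using G(2) t closure_subset by (metis subsetD)
qed

lemma C21_facts:
  assumes C: "C21 \<Omega> f" and t: "t > 0" and b: "bounded \<Omega>"
  shows "continuous_on (closure \<Omega>) (\<lambda>y. f y t)"
    "\<exists>B. \<forall>x\<in>closure \<Omega>. \<bar>f x t\<bar> \<le> B"
    "\<And>i x. x \<in> \<Omega> \<Longrightarrow> has_pd i (\<lambda>y. f y t) x (pd i (\<lambda>y. f y t) x)"
    "\<And>i. continuous_on \<Omega> (pd i (\<lambda>y. f y t))"
    "\<exists>B. \<forall>i. \<forall>x\<in>\<Omega>. \<bar>pd i (\<lambda>y. f y t) x\<bar> \<le> B"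
    "\<And>i j x. x \<in> \<Omega> \<Longrightarrow> has_pd j (pd i (\<lambda>y. f y t)) x (pd j (pd i (\<lambda>y. f y t)) x)"
    "\<And>i j. continuous_on \<Omega> (pd j (pd i (\<lambda>y. f y t)))"
    "\<exists>B. \<forall>i j. \<forall>x\<in>\<Omega>. \<bar>pd j (pd i (\<lambda>y. f y t)) x\<bar> \<le> B"
proof -
  have c0: "continuous_on (closure \<Omega> \<times> {0..}) (\<lambda>(x, t). f x t)" using C unfolding C21_def by blast
  show c: "continuous_on (closure \<Omega>) (\<lambda>y. f y t)"
  proof -
    have "continuous_on (closure \<Omega>) (\<lambda>y. (\<lambda>(x, t). f x t) (y, t))"
      by (rule continuous_on_compose2[OF c0]) (use t in \<open>auto intro!: continuous_intros\<close>)
    then show ?thesis by simp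
  qed
  show "\<exists>B. \<forall>x\<in>closure \<Omega>. \<bar>f x t\<bar> \<le> B"
    using compact_bound[OF _ c] b by (metis compact_closure)
  show "\<And>i x. x \<in> \<Omega> \<Longrightarrow> has_pd i (\<lambda>y. f y t) x (pd i (\<lambda>y. f y t) x)"
    using C t unfolding C21_def by (auto intro: pdiff_has_pd)
  show "\<And>i j x. x \<in> \<Omega> \<Longrightarrow> has_pd j (pd i (\<lambda>y. f y t)) x (pd j (pd i (\<lambda>y. f y t)) x)"
    using C t unfolding C21_def by (auto intro: pdiff_has_pd)
  have e1: "ext_cont \<Omega> (\<lambda>x t. pd i (\<lambda>y. f y t) x)" for i using C unfolding C21_def by blast
  have e2: "ext_cont \<Omega> (\<lambda>x t. pd j (pd i (\<lambda>y. f y t)) x)" for i j using C unfolding C21_def by blast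
  show "\<And>i. continuous_on \<Omega> (pd i (\<lambda>y. f y t))"
    using ext_cont_facts(1)[OF e1 t b] by simp
  show "\<And>i j. continuous_on \<Omega> (pd j (pd i (\<lambda>y. f y t)))"
    using ext_cont_facts(1)[OF e2 t b] by simp
  show "\<exists>B. \<forall>i. \<forall>x\<in>\<Omega>. \<bar>pd i (\<lambda>y. f y t) x\<bar> \<le> B"
    by (rule unif_bound_fin) (use ext_cont_facts(2)[OF e1 t b] in simp)
  have "\<exists>B. \<forall>ij. \<forall>x\<in>\<Omega>. \<bar>(\<lambda>ij x. pd (snd ij) (pd (fst ij) (\<lambda>y. f y t)) x) ij x\<bar> \<le> B"
    by (rule unif_bound_fin) (use ext_cont_facts(2)[OF e2 t b] in simp)
  then show "\<exists>B. \<forall>i j. \<forall>x\<in>\<Omega>. \<bar>pd j (pd i (\<lambda>y. f y t)) x\<bar> \<le> B" by auto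
qed


lemma okF_of_comps:
  fixes F :: "pt \<Rightarrow> pt"
  assumes hp: "\<And>i x. x \<in> S \<Longrightarrow> has_pd i (\<lambda>y. F y $ i) x (pd i (\<lambda>y. F y $ i) x)"
    and c: "\<And>i. continuous_on S (\<lambda>y. F y $ i)"
    and b: "\<exists>B. \<forall>i. \<forall>x\<in>S. \<bar>F x $ i\<bar> \<le> B"
    and dc: "\<And>i. continuous_on S (pd i (\<lambda>y. F y $ i))"
    and db: "\<exists>B. \<forall>i. \<forall>x\<in>S. \<bar>pd i (\<lambda>y. F y $ i) x\<bar> \<le> B"
  shows "okF S F"
  unfolding okF_def
proof (intro conjI)
  show "\<forall>i. \<forall>x\<in>S. has_pd i (\<lambda>y. F y $ i) x (pd i (\<lambda>y. F y $ i) x)" using hp by blast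
  have "continuous_on S (\<lambda>y. \<chi> i. F y $ i)" by (intro continuous_on_vec_lambda c)
  then show "continuous_on S F" by simp
  obtain B where B: "\<And>i x. x \<in> S \<Longrightarrow> \<bar>F x $ i\<bar> \<le> B" using b by blast
  have "norm (F x) \<le> (\<Sum>i\<in>(UNIV::2 set). B)" if "x \<in> S" for x
  proof -
    have "(\<Sum>i\<in>UNIV. \<bar>F x $ i\<bar>) \<le> (\<Sum>i\<in>(UNIV::2 set). B)" by (rule sum_mono) (use B[OF that] in auto)
    then show ?thesis using norm_le_l1_cart[of "F x"] by linarith
  qed
  then show "\<exists>B. \<forall>x\<in>S. norm (F x) \<le> B" by blast
qed (use dc db in auto)

lemma okF_grad:
  assumes C: "C21 \<Omega> f" and t: "t > 0" and b: "bounded \<Omega>"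
  shows "okF \<Omega> (grad (\<lambda>y. f y t))"
proof -
  have eq: "(\<lambda>y. grad (\<lambda>y. f y t) y $ i) = pd i (\<lambda>y. f y t)" for i by (simp add: grad_def)
  show ?thesis
  proof (rule okF_of_comps; (unfold eq)?)
    show "has_pd i (pd i (\<lambda>y. f y t)) x (pd i (pd i (\<lambda>y. f y t)) x)" if "x \<in> \<Omega>" for i x
      using C21_facts(6)[OF C t b that] .
    show "continuous_on \<Omega> (pd i (\<lambda>y. f y t))" for i using C21_facts(4)[OF C t b] .
    show "\<exists>B. \<forall>i. \<forall>x\<in>\<Omega>. \<bar>grad (\<lambda>y. f y t) x $ i\<bar> \<le> B"
      using C21_facts(5)[OF C t b] by (simp add: grad_def)
    show "continuous_on \<Omega> (pd i (pd i (\<lambda>y. f y t)))" for i using C21_facts(7)[OF C t b] .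
    show "\<exists>B. \<forall>i. \<forall>x\<in>\<Omega>. \<bar>pd i (pd i (\<lambda>y. f y t)) x\<bar> \<le> B"
      using C21_facts(8)[OF C t b] by blast
  qed
qed

lemma okF_vec:
  assumes C0: "\<And>i. C21 \<Omega> (ucomp u i)" and t: "t > 0" and b: "bounded \<Omega>"
  shows "okF \<Omega> (\<lambda>y. u y t)"
proof -
  have C: "C21 \<Omega> (\<lambda>x t. u x t $ i)" for i using C0[of i] by (simp add: ucomp_def)
  note f = C21_facts[OF C t b]
  show ?thesis
  proof (rule okF_of_comps)
    show "has_pd i (\<lambda>y. u y t $ i) x (pd i (\<lambda>y. u y t $ i) x)" if "x \<in> \<Omega>" for i x
      using f(3)[OF that] by simp
    show "continuous_on \<Omega> (\<lambda>y. u y t $ i)" for i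
      using continuous_on_subset[OF f(1) closure_subset] by simp
    show "continuous_on \<Omega> (pd i (\<lambda>y. u y t $ i))" for i
      using f(4) by simp
    show "\<exists>B. \<forall>i. \<forall>x\<in>\<Omega>. \<bar>u x t $ i\<bar> \<le> B"
      by (rule unif_bound_fin) (use f(2) closure_subset in fastforce)
    show "\<exists>B. \<forall>i. \<forall>x\<in>\<Omega>. \<bar>pd i (\<lambda>y. u y t $ i) x\<bar> \<le> B"
      by (rule unif_bound_fin) (use f(5) in fastforce)
  qed
qed

lemma okF_scal:
  assumes C: "C21 \<Omega> a" and V: "okF \<Omega> V" and t: "t > 0" and b: "bounded \<Omega>"
  shows "okF \<Omega> (\<lambda>y. a y t *\<^sub>R V y)"
    "\<And>i x. x \<in> \<Omega> \<Longrightarrow> pd i (\<lambda>y. (a y t *\<^sub>R V y) $ i) x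
        = pd i (\<lambda>y. a y t) x * V x $ i + a x t * pd i (\<lambda>y. V y $ i) x"
proof -
  have eq: "(\<lambda>y. (a y t *\<^sub>R V y) $ i) = (\<lambda>y. a y t * V y $ i)" for i by simp
  have V1: "\<And>i x. x \<in> \<Omega> \<Longrightarrow> has_pd i (\<lambda>y. V y $ i) x (pd i (\<lambda>y. V y $ i) x)"
    and V2: "continuous_on \<Omega> V" and V4: "\<And>i. continuous_on \<Omega> (pd i (\<lambda>y. V y $ i))"
    using V unfolding okF_def by auto
  obtain BV where BV: "\<And>x. x \<in> \<Omega> \<Longrightarrow> norm (V x) \<le> BV" using V unfolding okF_def by blast
  obtain BdV where BdV: "\<And>i x. x \<in> \<Omega> \<Longrightarrow> \<bar>pd i (\<lambda>y. V y $ i) x\<bar> \<le> BdV" using V unfolding okF_def by blast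
  obtain Ba where Ba: "\<And>x. x \<in> closure \<Omega> \<Longrightarrow> \<bar>a x t\<bar> \<le> Ba" using C21_facts(2)[OF C t b] by blast
  obtain Bda where Bda: "\<And>i x. x \<in> \<Omega> \<Longrightarrow> \<bar>pd i (\<lambda>y. a y t) x\<bar> \<le> Bda" using C21_facts(5)[OF C t b] by blast
  have hp: "has_pd i (\<lambda>y. a y t * V y $ i) x (pd i (\<lambda>y. a y t) x * V x $ i + a x t * pd i (\<lambda>y. V y $ i) x)"
    if "x \<in> \<Omega>" for i x
    by (rule has_pd_mult[OF C21_facts(3)[OF C t b that] V1[OF that]])
  show pdeq: "\<And>i x. x \<in> \<Omega> \<Longrightarrow> pd i (\<lambda>y. (a y t *\<^sub>R V y) $ i) x
        = pd i (\<lambda>y. a y t) x * V x $ i + a x t * pd i (\<lambda>y. V y $ i) x"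
    unfolding eq using hp pd_eq by blast
  have Vc: "continuous_on \<Omega> (\<lambda>y. V y $ i)" for i using V2 by (intro continuous_intros)
  have ac: "continuous_on \<Omega> (\<lambda>y. a y t)"
    using C21_facts(1)[OF C t b] continuous_on_subset closure_subset by blast
  show "okF \<Omega> (\<lambda>y. a y t *\<^sub>R V y)"
  proof (rule okF_of_comps)
    show "has_pd i (\<lambda>y. (a y t *\<^sub>R V y) $ i) x (pd i (\<lambda>y. (a y t *\<^sub>R V y) $ i) x)" if "x \<in> \<Omega>" for i x
      using hp[OF that] pdeq[OF that] unfolding eq by simp
    show "continuous_on \<Omega> (\<lambda>y. (a y t *\<^sub>R V y) $ i)" for i
      unfolding eq by (intro continuous_intros ac Vc)
    show "\<exists>B. \<forall>i. \<forall>x\<in>\<Omega>. \<bar>(a x t *\<^sub>R V x) $ i\<bar> \<le> B"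
    proof (intro exI allI ballI)
      fix i x assume x: "x \<in> \<Omega>"
      have xc: "x \<in> closure \<Omega>" using x closure_subset by blast
      have "\<bar>a x t\<bar> * \<bar>V x $ i\<bar> \<le> \<bar>Ba\<bar> * \<bar>BV\<bar>"
        using Ba[OF xc] BV[OF x] component_le_norm_cart[of "V x" i]
        by (intro mult_mono) auto
      then show "\<bar>(a x t *\<^sub>R V x) $ i\<bar> \<le> \<bar>Ba\<bar> * \<bar>BV\<bar>" by (simp add: abs_mult)
    qed
    show "continuous_on \<Omega> (pd i (\<lambda>y. (a y t *\<^sub>R V y) $ i))" for i
    proof (rule continuous_on_eq[OF _ pdeq[symmetric]])
      show "continuous_on \<Omega> (\<lambda>x. pd i (\<lambda>y. a y t) x * V x $ i + a x t * pd i (\<lambda>y. V y $ i) x)"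
        by (intro continuous_intros ac Vc V4 C21_facts(4)[OF C t b])
    qed
    show "\<exists>B. \<forall>i. \<forall>x\<in>\<Omega>. \<bar>pd i (\<lambda>y. (a y t *\<^sub>R V y) $ i) x\<bar> \<le> B"
    proof (intro exI allI ballI)
      fix i x assume x: "x \<in> \<Omega>"
      have 1: "\<bar>pd i (\<lambda>y. a y t) x\<bar> * \<bar>V x $ i\<bar> \<le> \<bar>Bda\<bar> * \<bar>BV\<bar>"
      proof (rule mult_mono)
        show "\<bar>pd i (\<lambda>y. a y t) x\<bar> \<le> \<bar>Bda\<bar>" using Bda[OF x, of i] by linarith
        show "\<bar>V x $ i\<bar> \<le> \<bar>BV\<bar>" using BV[OF x] component_le_norm_cart[of "V x" i] by linarith
      qed auto
      have 2: "\<bar>a x t\<bar> * \<bar>pd i (\<lambda>y. V y $ i) x\<bar> \<le> \<bar>Ba\<bar> * \<bar>BdV\<bar>"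
      proof (rule mult_mono)
        have xc: "x \<in> closure \<Omega>" using x closure_subset by blast
        show "\<bar>a x t\<bar> \<le> \<bar>Ba\<bar>" using Ba[OF xc] by linarith
        show "\<bar>pd i (\<lambda>y. V y $ i) x\<bar> \<le> \<bar>BdV\<bar>" using BdV[OF x, of i] by linarith
      qed auto
      have "\<bar>pd i (\<lambda>y. (a y t *\<^sub>R V y) $ i) x\<bar>
          \<le> \<bar>pd i (\<lambda>y. a y t) x\<bar> * \<bar>V x $ i\<bar> + \<bar>a x t\<bar> * \<bar>pd i (\<lambda>y. V y $ i) x\<bar>"
        unfolding pdeq[OF x] abs_mult[symmetric] by (rule abs_triangle_ineq)
      also have "\<dots> \<le> \<bar>Bda\<bar> * \<bar>BV\<bar> + \<bar>Ba\<bar> * \<bar>BdV\<bar>" using 1 2 by linarith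
      finally show "\<bar>pd i (\<lambda>y. (a y t *\<^sub>R V y) $ i) x\<bar> \<le> \<bar>Bda\<bar> * \<bar>BV\<bar> + \<bar>Ba\<bar> * \<bar>BdV\<bar>" .
    qed
  qed
qed


context dom
begin

lemma int_on:
  fixes f :: "pt \<Rightarrow> real"
  assumes "continuous_on \<Omega> f" "\<exists>B. \<forall>x\<in>\<Omega>. \<bar>f x\<bar> \<le> B"
  shows "f integrable_on \<Omega>"
  using assms cont_bdd_integrable(2)[OF lmeas] by blast

lemma int_cl:
  fixes f :: "pt \<Rightarrow> real"
  assumes "continuous_on (closure \<Omega>) f"
  shows "f integrable_on \<Omega>"
proof (rule int_on)
  show "continuous_on \<Omega> f" using continuous_on_subset[OF assms closure_subset] .
  obtain B where "\<And>x. x \<in> closure \<Omega> \<Longrightarrow> \<bar>f x\<bar> \<le> B" using bound_cl[OF assms] by blast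
  then show "\<exists>B. \<forall>x\<in>\<Omega>. \<bar>f x\<bar> \<le> B" using closure_subset by blast
qed

lemma int_okF: "okF \<Omega> F \<Longrightarrow> divg F integrable_on \<Omega>"
proof -
  assume ok: "okF \<Omega> F"
  obtain B where "\<And>x. x \<in> \<Omega> \<Longrightarrow> \<bar>divg F x\<bar> \<le> B" using divg_bound[OF ok] by blast
  then show ?thesis using int_on[OF divg_cont[OF ok]] by blast
qed

lemma cont_within: "continuous_on (closure \<Omega>) f \<Longrightarrow> x \<in> closure \<Omega> \<Longrightarrow> (f \<longlongrightarrow> f x) (at x within \<Omega>)"
  unfolding continuous_on_def using tendsto_within_subset closure_subset by blast

lemma u_cont_cl:
  assumes Cu: "\<And>i. C21 \<Omega> (ucomp u i)" and t: "t > 0"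
  shows "continuous_on (closure \<Omega>) (\<lambda>y. u y t)"
proof -
  have "continuous_on (closure \<Omega>) (\<lambda>y. ucomp u i y t)" for i using C21_facts(1)[OF Cu t \<Omega>b] .
  then have "continuous_on (closure \<Omega>) (\<lambda>y. \<chi> i. ucomp u i y t)" by (intro continuous_on_vec_lambda)
  then show ?thesis by (simp add: ucomp_def)
qed

lemma div_grad: "divg (grad g) = lap g"
  by (rule ext) (simp add: divg_def lap_def grad_def)

lemma lap_int0:
  assumes C: "C21 \<Omega> f" and t: "t > 0"
    and bf: "\<And>x. x \<in> frontier \<Omega> \<Longrightarrow> ((\<lambda>y. grad (\<lambda>z. f z t) y \<bullet> gr x) \<longlongrightarrow> 0) (at x within \<Omega>)"
  shows "integral \<Omega> (lap (\<lambda>y. f y t)) = 0" "lap (\<lambda>y. f y t) integrable_on \<Omega>"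
  using div_zero[OF okF_grad[OF C t \<Omega>b] bf] int_okF[OF okF_grad[OF C t \<Omega>b]]
  unfolding div_grad by auto

lemma chem_int0:
  assumes Cn: "C21 \<Omega> n" and Cw: "C21 \<Omega> w" and t: "t > 0"
    and bw: "\<And>x. x \<in> frontier \<Omega> \<Longrightarrow> ((\<lambda>y. grad (\<lambda>z. w z t) y \<bullet> gr x) \<longlongrightarrow> 0) (at x within \<Omega>)"
  shows "integral \<Omega> (divg (\<lambda>y. n y t *\<^sub>R grad (\<lambda>z. w z t) y)) = 0"
    "divg (\<lambda>y. n y t *\<^sub>R grad (\<lambda>z. w z t) y) integrable_on \<Omega>"
proof -
  note ok = okF_scal(1)[OF Cn okF_grad[OF Cw t \<Omega>b] t \<Omega>b]
  show "divg (\<lambda>y. n y t *\<^sub>R grad (\<lambda>z. w z t) y) integrable_on \<Omega>" by (rule int_okF[OF ok])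
  show "integral \<Omega> (divg (\<lambda>y. n y t *\<^sub>R grad (\<lambda>z. w z t) y)) = 0"
  proof (rule div_zero[OF ok])
    fix x assume x: "x \<in> frontier \<Omega>"
    have xc: "x \<in> closure \<Omega>" using x by (simp add: frontier_def)
    have "((\<lambda>y. n y t * (grad (\<lambda>z. w z t) y \<bullet> gr x)) \<longlongrightarrow> n x t * 0) (at x within \<Omega>)"
      by (rule tendsto_mult[OF cont_within[OF C21_facts(1)[OF Cn t \<Omega>b] xc] bw[OF x]])
    then show "((\<lambda>y. (n y t *\<^sub>R grad (\<lambda>z. w z t) y) \<bullet> gr x) \<longlongrightarrow> 0) (at x within \<Omega>)"
      by simp
  qed
qed

lemma conv_int0:
  assumes Cn: "C21 \<Omega> n" and Cu: "\<And>i. C21 \<Omega> (ucomp u i)" and t: "t > 0"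
    and divu: "\<And>x. x \<in> \<Omega> \<Longrightarrow> divg (\<lambda>y. u y t) x = 0"
    and bu: "\<And>x. x \<in> frontier \<Omega> \<Longrightarrow> u x t = 0"
  shows "integral \<Omega> (\<lambda>x. u x t \<bullet> grad (\<lambda>y. n y t) x) = 0"
    "(\<lambda>x. u x t \<bullet> grad (\<lambda>y. n y t) x) integrable_on \<Omega>"
proof -
  note V = okF_vec[OF Cu t \<Omega>b]
  note ok = okF_scal(1)[OF Cn V t \<Omega>b]
  have eq: "divg (\<lambda>y. n y t *\<^sub>R u y t) x = u x t \<bullet> grad (\<lambda>y. n y t) x" if x: "x \<in> \<Omega>" for x
  proof -
    have "divg (\<lambda>y. n y t *\<^sub>R u y t) x
        = (\<Sum>i\<in>UNIV. pd i (\<lambda>y. n y t) x * u x t $ i + n x t * pd i (\<lambda>y. u y t $ i) x)"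
      unfolding divg_def using okF_scal(2)[OF Cn V t \<Omega>b x] by simp
    also have "\<dots> = (\<Sum>i\<in>UNIV. u x t $ i * pd i (\<lambda>y. n y t) x) + n x t * divg (\<lambda>y. u y t) x"
      by (simp add: sum.distrib sum_distrib_left divg_def mult.commute)
    also have "\<dots> = u x t \<bullet> grad (\<lambda>y. n y t) x"
      using divu[OF x] by (simp add: inner_vec_def grad_def)
    finally show ?thesis .
  qed
  have I0: "integral \<Omega> (divg (\<lambda>y. n y t *\<^sub>R u y t)) = 0"
  proof (rule div_zero[OF ok])
    fix x assume x: "x \<in> frontier \<Omega>"
    have xc: "x \<in> closure \<Omega>" using x by (simp add: frontier_def)
    have "((\<lambda>y. u y t) \<longlongrightarrow> u x t) (at x within \<Omega>)"
      by (rule cont_within[OF u_cont_cl[OF Cu t] xc])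
    then have "((\<lambda>y. u y t \<bullet> gr x) \<longlongrightarrow> u x t \<bullet> gr x) (at x within \<Omega>)"
      by (intro tendsto_intros)
    then have "((\<lambda>y. n y t * (u y t \<bullet> gr x)) \<longlongrightarrow> n x t * (u x t \<bullet> gr x)) (at x within \<Omega>)"
      by (rule tendsto_mult[OF cont_within[OF C21_facts(1)[OF Cn t \<Omega>b] xc]])
    then show "((\<lambda>y. (n y t *\<^sub>R u y t) \<bullet> gr x) \<longlongrightarrow> 0) (at x within \<Omega>)"
      using bu[OF x] by simp
  qed
  have II: "divg (\<lambda>y. n y t *\<^sub>R u y t) integrable_on \<Omega>" by (rule int_okF[OF ok])
  show "(\<lambda>x. u x t \<bullet> grad (\<lambda>y. n y t) x) integrable_on \<Omega>"
    by (rule integrable_eq[OF II]) (simp add: eq)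
  show "integral \<Omega> (\<lambda>x. u x t \<bullet> grad (\<lambda>y. n y t) x) = 0"
    using I0 integral_cong[of \<Omega> "divg (\<lambda>y. n y t *\<^sub>R u y t)" "\<lambda>x. u x t \<bullet> grad (\<lambda>y. n y t) x"] eq by auto
qed

end


context dom
begin

lemma hint: "f integrable_on \<Omega> \<Longrightarrow> (f has_integral integral \<Omega> f) \<Omega>"
  by (rule integrable_integral)

lemma n_identity:
  assumes Cn: "C21 \<Omega> n" and Cw: "C21 \<Omega> w" and Cu: "\<And>i. C21 \<Omega> (ucomp u i)" and t: "t > 0"
    and eqn: "\<And>x. x \<in> \<Omega> \<Longrightarrow> dt n x t + u x t \<bullet> grad (\<lambda>y. n y t) x
          = lap (\<lambda>y. n y t) x + chi * divg (\<lambda>y. n y t *\<^sub>R grad (\<lambda>z. w z t) y) x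
            + n x t * (r - \<mu> * n x t)"
    and divu: "\<And>x. x \<in> \<Omega> \<Longrightarrow> divg (\<lambda>y. u y t) x = 0"
    and bn: "\<And>x. x \<in> frontier \<Omega> \<Longrightarrow> ((\<lambda>y. grad (\<lambda>z. n z t) y \<bullet> gr x) \<longlongrightarrow> 0) (at x within \<Omega>)"
    and bw: "\<And>x. x \<in> frontier \<Omega> \<Longrightarrow> ((\<lambda>y. grad (\<lambda>z. w z t) y \<bullet> gr x) \<longlongrightarrow> 0) (at x within \<Omega>)"
    and bu: "\<And>x. x \<in> frontier \<Omega> \<Longrightarrow> u x t = 0"
  shows "integral \<Omega> (\<lambda>x. dt n x t) = r * integral \<Omega> (\<lambda>x. n x t) - \<mu> * integral \<Omega> (\<lambda>x. (n x t)\<^sup>2)"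
proof -
  have L: "(lap (\<lambda>y. n y t) has_integral 0) \<Omega>"
    using hint[OF lap_int0(2)[OF Cn t bn]] lap_int0(1)[OF Cn t bn] by simp
  have Cx: "(divg (\<lambda>y. n y t *\<^sub>R grad (\<lambda>z. w z t) y) has_integral 0) \<Omega>"
    using hint[OF chem_int0(2)[OF Cn Cw t bw]] chem_int0(1)[OF Cn Cw t bw] by simp
  have U: "((\<lambda>x. u x t \<bullet> grad (\<lambda>y. n y t) x) has_integral 0) \<Omega>"
    using hint[OF conv_int0(2)[OF Cn Cu t divu bu]] conv_int0(1)[OF Cn Cu t divu bu] by simp
  have nc: "continuous_on (closure \<Omega>) (\<lambda>x. n x t)" using C21_facts(1)[OF Cn t \<Omega>b] .
  have N: "((\<lambda>x. n x t) has_integral integral \<Omega> (\<lambda>x. n x t)) \<Omega>"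
    by (rule hint[OF int_cl[OF nc]])
  have N2: "((\<lambda>x. (n x t)\<^sup>2) has_integral integral \<Omega> (\<lambda>x. (n x t)\<^sup>2)) \<Omega>"
    by (rule hint[OF int_cl]) (intro continuous_intros nc)
  have all: "((\<lambda>x. lap (\<lambda>y. n y t) x + chi * divg (\<lambda>y. n y t *\<^sub>R grad (\<lambda>z. w z t) y) x
        + (r * n x t - \<mu> * (n x t)\<^sup>2) - u x t \<bullet> grad (\<lambda>y. n y t) x)
      has_integral (0 + chi * 0 + (r * integral \<Omega> (\<lambda>x. n x t) - \<mu> * integral \<Omega> (\<lambda>x. (n x t)\<^sup>2)) - 0)) \<Omega>"
    by (intro has_integral_diff has_integral_add has_integral_mult_right L Cx U N N2)
  have "((\<lambda>x. dt n x t) has_integral (r * integral \<Omega> (\<lambda>x. n x t) - \<mu> * integral \<Omega> (\<lambda>x. (n x t)\<^sup>2))) \<Omega>"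
  proof (rule has_integral_eq[OF _ all[simplified]])
    fix x assume "x \<in> \<Omega>"
    then show "lap (\<lambda>y. n y t) x + chi * divg (\<lambda>y. n y t *\<^sub>R grad (\<lambda>z. w z t) y) x
        + (r * n x t - \<mu> * (n x t)\<^sup>2) - u x t \<bullet> grad (\<lambda>y. n y t) x = dt n x t"
      using eqn[of x] by (simp add: algebra_simps power2_eq_square)
  qed
  then show ?thesis by (rule integral_unique)
qed

lemma w_identity:
  assumes Cn: "C21 \<Omega> n" and Cw: "C21 \<Omega> w" and Cu: "\<And>i. C21 \<Omega> (ucomp u i)" and t: "t > 0"
    and eqw: "\<And>x. x \<in> \<Omega> \<Longrightarrow> dt w x t + u x t \<bullet> grad (\<lambda>y. w y t) x
          = lap (\<lambda>y. w y t) x - (norm (grad (\<lambda>y. w y t) x))\<^sup>2 + n x t"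
    and divu: "\<And>x. x \<in> \<Omega> \<Longrightarrow> divg (\<lambda>y. u y t) x = 0"
    and bw: "\<And>x. x \<in> frontier \<Omega> \<Longrightarrow> ((\<lambda>y. grad (\<lambda>z. w z t) y \<bullet> gr x) \<longlongrightarrow> 0) (at x within \<Omega>)"
    and bu: "\<And>x. x \<in> frontier \<Omega> \<Longrightarrow> u x t = 0"
  shows "integral \<Omega> (\<lambda>x. dt w x t) = integral \<Omega> (\<lambda>x. n x t) - integral \<Omega> (\<lambda>x. (norm (grad (\<lambda>y. w y t) x))\<^sup>2)"
    "(\<lambda>x. (norm (grad (\<lambda>y. w y t) x))\<^sup>2) integrable_on \<Omega>"
proof -
  have L: "(lap (\<lambda>y. w y t) has_integral 0) \<Omega>"
    using hint[OF lap_int0(2)[OF Cw t bw]] lap_int0(1)[OF Cw t bw] by simp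
  have U: "((\<lambda>x. u x t \<bullet> grad (\<lambda>y. w y t) x) has_integral 0) \<Omega>"
    using hint[OF conv_int0(2)[OF Cw Cu t divu bu]] conv_int0(1)[OF Cw Cu t divu bu] by simp
  have nc: "continuous_on (closure \<Omega>) (\<lambda>x. n x t)" using C21_facts(1)[OF Cn t \<Omega>b] .
  have N: "((\<lambda>x. n x t) has_integral integral \<Omega> (\<lambda>x. n x t)) \<Omega>"
    by (rule hint[OF int_cl[OF nc]])
  note ok = okF_grad[OF Cw t \<Omega>b]
  have gc: "continuous_on \<Omega> (grad (\<lambda>y. w y t))" using ok unfolding okF_def by blast
  obtain BF where BF: "\<And>x. x \<in> \<Omega> \<Longrightarrow> norm (grad (\<lambda>y. w y t) x) \<le> BF" using ok unfolding okF_def by blast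
  show gi: "(\<lambda>x. (norm (grad (\<lambda>y. w y t) x))\<^sup>2) integrable_on \<Omega>"
  proof (rule int_on)
    show "continuous_on \<Omega> (\<lambda>x. (norm (grad (\<lambda>y. w y t) x))\<^sup>2)" by (intro continuous_intros gc)
    have "\<bar>(norm (grad (\<lambda>y. w y t) x))\<^sup>2\<bar> \<le> BF\<^sup>2" if "x \<in> \<Omega>" for x
      using BF[OF that] by (simp add: power_mono)
    then show "\<exists>B. \<forall>x\<in>\<Omega>. \<bar>(norm (grad (\<lambda>y. w y t) x))\<^sup>2\<bar> \<le> B" by blast
  qed
  note G = hint[OF gi]
  have all: "((\<lambda>x. lap (\<lambda>y. w y t) x - (norm (grad (\<lambda>y. w y t) x))\<^sup>2 + n x t - u x t \<bullet> grad (\<lambda>y. w y t) x)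
      has_integral (0 - integral \<Omega> (\<lambda>x. (norm (grad (\<lambda>y. w y t) x))\<^sup>2) + integral \<Omega> (\<lambda>x. n x t) - 0)) \<Omega>"
    by (intro has_integral_diff has_integral_add L U N G)
  have "((\<lambda>x. dt w x t) has_integral (integral \<Omega> (\<lambda>x. n x t) - integral \<Omega> (\<lambda>x. (norm (grad (\<lambda>y. w y t) x))\<^sup>2))) \<Omega>"
  proof (rule has_integral_eq[OF _ all[simplified]])
    fix x assume "x \<in> \<Omega>"
    then show "lap (\<lambda>y. w y t) x - (norm (grad (\<lambda>y. w y t) x))\<^sup>2 + n x t - u x t \<bullet> grad (\<lambda>y. w y t) x = dt w x t"
      using eqw[of x] by (simp add: algebra_simps)
  qed
  then show "integral \<Omega> (\<lambda>x. dt w x t) = integral \<Omega> (\<lambda>x. n x t) - integral \<Omega> (\<lambda>x. (norm (grad (\<lambda>y. w y t) x))\<^sup>2)"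
    by (rule integral_unique)
qed

end


context dom
begin

lemma time_deriv:
  assumes C: "C21 \<Omega> f" and t: "t > 0"
  shows "((\<lambda>s. integral \<Omega> (\<lambda>x. f x s)) has_real_derivative integral \<Omega> (\<lambda>x. dt f x t)) (at t)"
proof -
  obtain G where G: "continuous_on (closure \<Omega> \<times> {0<..}) G" "\<And>x s. x \<in> \<Omega> \<Longrightarrow> s > 0 \<Longrightarrow> G (x, s) = dt f x s"
    using C unfolding C21_def ext_cont_def by blast
  have cc: "compact (closure \<Omega> \<times> {t/2..t+1})" using compact_cl by (intro compact_Times) auto
  obtain B where B: "\<And>z. z \<in> closure \<Omega> \<times> {t/2..t+1} \<Longrightarrow> \<bar>G z\<bar> \<le> B"
    using compact_bound[OF cc continuous_on_subset[OF G(1)]] t by force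
  show ?thesis
proof (rule param_deriv[OF lmeas, of "t / 2" t "t + 1" _ _ B])
  show "t / 2 < t" "t < t + 1" using t by auto
  show "((\<lambda>s. f x s) has_real_derivative dt f x s) (at s)" if "x \<in> \<Omega>" "t / 2 < s" "s < t + 1" for x s
  proof -
    have "(\<lambda>s. f x s) differentiable (at s)" using C that t unfolding C21_def by auto
    then show ?thesis unfolding dt_def using DERIV_deriv_iff_real_differentiable by blast
  qed
  show "\<bar>dt f x s\<bar> \<le> B" if "x \<in> \<Omega>" "t / 2 < s" "s < t + 1" for x s
    using B[of "(x, s)"] G(2)[of x s] that closure_subset t by force
  show "(\<lambda>x. f x s) integrable_on \<Omega>" if "t / 2 < s" "s < t + 1" for s
    using int_cl[OF C21_facts(1)[OF C _ \<Omega>b]] that t by simp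
qed
qed

lemma time_cont_gen:
  fixes P :: "pt \<Rightarrow> real \<Rightarrow> real"
  assumes "continuous_on (closure \<Omega> \<times> {a..b}) (\<lambda>(x, s). P x s)"
  shows "continuous_on {a..b} (\<lambda>s. integral \<Omega> (\<lambda>x. P x s))"
  by (rule param_cont[OF lmeas compact_cl closure_subset compact_Icc assms])

lemma time_cont:
  assumes C: "C21 \<Omega> f" and a: "0 \<le> a"
  shows "continuous_on {a..b} (\<lambda>s. integral \<Omega> (\<lambda>x. f x s))"
    "continuous_on {a..b} (\<lambda>s. integral \<Omega> (\<lambda>x. (f x s)\<^sup>2))"
proof -
  have c0: "continuous_on (closure \<Omega> \<times> {0..}) (\<lambda>(x, t). f x t)" using C unfolding C21_def by blast
  have c1: "continuous_on (closure \<Omega> \<times> {a..b}) (\<lambda>(x, t). f x t)"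
    by (rule continuous_on_subset[OF c0]) (use a in auto)
  show "continuous_on {a..b} (\<lambda>s. integral \<Omega> (\<lambda>x. f x s))" by (rule time_cont_gen[OF c1])
  have c2: "continuous_on (closure \<Omega> \<times> {a..b}) (\<lambda>(x, t). (f x t)\<^sup>2)"
  proof -
    have "continuous_on (closure \<Omega> \<times> {a..b}) (\<lambda>z. ((\<lambda>(x, t). f x t) z)\<^sup>2)"
      by (intro continuous_intros c1)
    then show ?thesis by (simp add: case_prod_beta)
  qed
  show "continuous_on {a..b} (\<lambda>s. integral \<Omega> (\<lambda>x. (f x s)\<^sup>2))" by (rule time_cont_gen[OF c2])
qed

lemma gw_cont:
  assumes C: "C21 \<Omega> w" and a: "0 < a"
  shows "continuous_on {a..b} (\<lambda>s. integral \<Omega> (\<lambda>x. (norm (grad (\<lambda>y. w y s) x))\<^sup>2))"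
proof -
  have "\<forall>i. \<exists>G. continuous_on (closure \<Omega> \<times> {0<..}) G \<and> (\<forall>x\<in>\<Omega>. \<forall>t>0. G (x, t) = pd i (\<lambda>y. w y t) x)"
    using C unfolding C21_def ext_cont_def by blast
  then obtain G where G: "\<And>i. continuous_on (closure \<Omega> \<times> {0<..}) (G i)"
    "\<And>i x t. x \<in> \<Omega> \<Longrightarrow> t > 0 \<Longrightarrow> G i (x, t) = pd i (\<lambda>y. w y t) x"
    by metis
  define P where "P x s = (\<Sum>i\<in>UNIV. (G i (x, s))\<^sup>2)" for x s
  have "continuous_on (closure \<Omega> \<times> {a..b}) (\<lambda>z. \<Sum>i\<in>UNIV. (G i z)\<^sup>2)"
    by (intro continuous_intros continuous_on_subset[OF G(1)]) (use a in auto)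
  then have Pc: "continuous_on (closure \<Omega> \<times> {a..b}) (\<lambda>(x, s). P x s)"
    unfolding P_def by (simp add: case_prod_beta)
  have eq: "(\<lambda>s. integral \<Omega> (\<lambda>x. P x s)) x = (\<lambda>s. integral \<Omega> (\<lambda>x. (norm (grad (\<lambda>y. w y s) x))\<^sup>2)) x"
    if "x \<in> {a..b}" for x
  proof -
    have "P y x = (norm (grad (\<lambda>y. w y x) y))\<^sup>2" if "y \<in> \<Omega>" for y
      unfolding P_def power2_norm_eq_inner inner_vec_def grad_def using G(2)[OF that] a \<open>x \<in> {a..b}\<close>
      by (simp add: power2_eq_square)
    then show ?thesis by (auto intro!: integral_cong)
  qed
  show ?thesis using continuous_on_eq[OF time_cont_gen[OF Pc] eq] .
qed

lemma cs:
  fixes f :: "pt \<Rightarrow> real"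
  assumes f: "f integrable_on \<Omega>" and f2: "(\<lambda>x. (f x)\<^sup>2) integrable_on \<Omega>" and m: "measure lebesgue \<Omega> > 0"
  shows "(integral \<Omega> f)\<^sup>2 \<le> measure lebesgue \<Omega> * integral \<Omega> (\<lambda>x. (f x)\<^sup>2)"
proof -
  let ?m = "measure lebesgue \<Omega>" and ?I = "integral \<Omega> f" and ?J = "integral \<Omega> (\<lambda>x. (f x)\<^sup>2)"
  define c where "c = ?I / ?m"
  have one: "((\<lambda>x. 1::real) has_integral ?m) \<Omega>"
    using lmeasure_integral[OF lmeas] integrable_integral[OF integrable_on_const[OF lmeas]] by metis
  have "((\<lambda>x. (f x)\<^sup>2 - 2 * c * f x + c\<^sup>2 * 1) has_integral (?J - 2 * c * ?I + c\<^sup>2 * ?m)) \<Omega>"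
    by (intro has_integral_add has_integral_diff has_integral_mult_right integrable_integral f f2 one)
  moreover have "\<And>x. (f x)\<^sup>2 - 2 * c * f x + c\<^sup>2 * 1 = (f x - c)\<^sup>2" by (simp add: power2_eq_square algebra_simps)
  ultimately have "((\<lambda>x. (f x - c)\<^sup>2) has_integral (?J - 2 * c * ?I + c\<^sup>2 * ?m)) \<Omega>" by simp
  then have "0 \<le> ?J - 2 * c * ?I + c\<^sup>2 * ?m" by (rule has_integral_nonneg) simp
  also have "?J - 2 * c * ?I + c\<^sup>2 * ?m = ?J - ?I\<^sup>2 / ?m"
    unfolding c_def using m by (simp add: power2_eq_square field_simps)
  finally show ?thesis using m by (simp add: field_simps)
qed

lemma pos_int:
  fixes f :: "pt \<Rightarrow> real"
  assumes f: "f integrable_on \<Omega>" and nn: "\<And>x. x \<in> \<Omega> \<Longrightarrow> f x \<ge> 0"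
    and B: "ball x1 r \<subseteq> \<Omega>" and r: "r > 0" and c: "c > 0" and fc: "\<And>x. x \<in> ball x1 r \<Longrightarrow> f x \<ge> c"
  shows "integral \<Omega> f > 0"
proof -
  have mb: "measure lebesgue (ball x1 r) > 0"
  proof -
    have "ball x1 r \<in> sets lborel" by simp
    then have "measure lebesgue (ball x1 r) = measure lborel (ball x1 r)" by (simp add: measure_completion)
    then show ?thesis using content_ball_pos[OF r] by simp
  qed
  have lb: "ball x1 r \<in> lmeasurable" by simp
  have gI: "((\<lambda>x. if x \<in> ball x1 r then c else 0) has_integral c * measure lebesgue (ball x1 r)) \<Omega>"
  proof -
    have "((\<lambda>x. c * 1) has_integral c * measure lebesgue (ball x1 r)) (ball x1 r)"
      using has_integral_mult_right[OF integrable_integral[OF integrable_on_const[OF lb]], of c]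
        lmeasure_integral[OF lb] by (metis (no_types))
    then have "((\<lambda>x. c) has_integral c * measure lebesgue (ball x1 r)) (ball x1 r)" by simp
    then show ?thesis
      using has_integral_restrict[of "ball x1 r" \<Omega> "\<lambda>x. c"] B by (simp add: Int_absorb2)
  qed
  have "c * measure lebesgue (ball x1 r) \<le> integral \<Omega> f"
    by (rule has_integral_le[OF gI integrable_integral[OF f]]) (use nn fc in auto)
  moreover have "c * measure lebesgue (ball x1 r) > 0" using c mb by simp
  ultimately show ?thesis by linarith
qed

end


lemma stay_below:
  fixes Y Y' :: "real \<Rightarrow> real"
  assumes Yd: "\<And>s. s > 0 \<Longrightarrow> (Y has_real_derivative Y' s) (at s)"
    and neg: "\<And>s. s > 0 \<Longrightarrow> Y s > L \<Longrightarrow> Y' s < 0"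
    and s1: "s1 > 0" "Y s1 \<le> L" and t: "s1 \<le> t"
  shows "Y t \<le> L"
proof (rule ccontr)
  assume "\<not> Y t \<le> L"
  then have Yt: "Y t > L" by simp
  have cont: "continuous_on {s1..t} Y"
  proof (rule continuous_at_imp_continuous_on, rule ballI)
    fix x assume "x \<in> {s1..t}"
    then have "x > 0" using s1 by auto
    then show "isCont Y x" by (rule DERIV_isCont[OF Yd])
  qed
  have dif: "\<And>x. x > 0 \<Longrightarrow> Y differentiable (at x)" using Yd real_differentiable_def by blast
  define S where "S = {s1..t} \<inter> Y -` {..L}"
  have cS: "closed S" unfolding S_def by (rule continuous_closed_preimage[OF cont]) auto
  have neS: "S \<noteq> {}" using s1 t unfolding S_def by auto
  have bS: "bdd_above S" unfolding S_def by (rule bdd_aboveI[of _ t]) auto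
  define s where "s = Sup S"
  have sS: "s \<in> S" unfolding s_def by (rule closed_contains_Sup[OF neS bS cS])
  then have s: "s1 \<le> s" "s \<le> t" "Y s \<le> L" unfolding S_def by auto
  then have st: "s < t" using Yt by (cases "s = t") auto
  have above: "Y z > L" if "s < z" "z \<le> t" for z
  proof (rule ccontr)
    assume "\<not> Y z > L"
    then have "z \<in> S" using that s unfolding S_def by auto
    then have "z \<le> s" unfolding s_def by (rule cSup_upper[OF _ bS])
    then show False using that by simp
  qed
  obtain l z where z: "s < z" "z < t" and dz: "DERIV Y z :> l" and eq: "Y t - Y s = (t - s) * l"
  proof -
    have "continuous_on {s..t} Y" by (rule continuous_on_subset[OF cont]) (use s in auto)
    moreover have "\<And>x. s < x \<Longrightarrow> x < t \<Longrightarrow> Y differentiable (at x)" using dif s s1 by simp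
    ultimately show ?thesis using MVT[OF st] that by blast
  qed
  have "l = Y' z" using DERIV_unique[OF dz Yd] z s s1 by simp
  moreover have "Y' z < 0" using neg above z s s1 by simp
  ultimately have "Y t - Y s < 0" using eq st by (simp add: mult_pos_neg)
  then show False using Yt s by linarith
qed

lemma eventually_below:
  fixes Y Y' :: "real \<Rightarrow> real"
  assumes Yd: "\<And>s. s > 0 \<Longrightarrow> (Y has_real_derivative Y' s) (at s)"
    and Ynn: "\<And>s. s > 0 \<Longrightarrow> Y s \<ge> 0"
    and neg: "\<And>s. s > 0 \<Longrightarrow> Y s > L \<Longrightarrow> Y' s \<le> - c" and c: "c > 0"
  shows "\<exists>s1>0. Y s1 \<le> L"
proof (rule ccontr)
  assume "\<not> ?thesis"
  then have all: "\<And>s. s > 0 \<Longrightarrow> Y s > L" by (auto simp: not_le)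
  define T where "T = 1 + (Y 1 + 1) / c"
  have Y1: "Y 1 \<ge> 0" using Ynn by simp
  have T1: "1 < T" unfolding T_def using c Y1 by (simp add: add_pos_nonneg)
  have cont: "continuous_on {1..T} Y"
  proof (rule continuous_at_imp_continuous_on, rule ballI)
    fix x assume "x \<in> {1..T}"
    then have "x > 0" by auto
    then show "isCont Y x" by (rule DERIV_isCont[OF Yd])
  qed
  have dif: "Y differentiable (at x)" if "1 < x" "x < T" for x
  proof -
    have "x > 0" using that by simp
    then show ?thesis using Yd real_differentiable_def by blast
  qed
  obtain l z where z: "1 < z" "z < T" and dz: "DERIV Y z :> l" and eq: "Y T - Y 1 = (T - 1) * l"
    using MVT[OF T1 cont dif] by blast
  have "l = Y' z" using DERIV_unique[OF dz Yd] z by simp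
  then have "l \<le> - c" using neg all z by simp
  then have "(T - 1) * l \<le> (T - 1) * (- c)" using T1 by (intro mult_left_mono) auto
  also have "(T - 1) * (- c) = - (Y 1 + 1)" unfolding T_def using c by simp
  finally have "Y T \<le> -1" using eq by linarith
  then show False using Ynn[of T] T1 by simp
qed


lemma neg_step:
  fixes y z r \<mu> m \<eta> K :: real
  assumes m: "m > 0" and mu: "\<mu> > 0" and eta: "\<eta> > 0" and K: "K = m * max r 0 / \<mu>"
    and y: "y > K + \<eta>" and yz: "y\<^sup>2 \<le> m * z"
  shows "r * y - \<mu> * z \<le> - (\<mu> * \<eta> * \<eta> / m)"
proof -
  have K0: "K \<ge> 0" unfolding K using m mu by simp
  have y0: "y > 0" using y K0 eta by linarith
  have "\<mu> * (y\<^sup>2 / m) \<le> \<mu> * z" using yz m mu by (intro mult_left_mono) (auto simp: field_simps)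
  then have a: "r * y - \<mu> * z \<le> y * (r - \<mu> * y / m)" by (simp add: power2_eq_square algebra_simps)
  have "\<mu> * K / m = max r 0" unfolding K using m mu by simp
  moreover have "\<mu> * y / m > \<mu> * (K + \<eta>) / m" using y m mu by (simp add: divide_strict_right_mono)
  ultimately have "\<mu> * y / m > max r 0 + \<mu> * \<eta> / m" by (simp add: algebra_simps add_divide_distrib)
  then have b: "r - \<mu> * y / m \<le> - (\<mu> * \<eta> / m)" by linarith
  have "y * (r - \<mu> * y / m) \<le> y * (- (\<mu> * \<eta> / m))" using b y0 by (intro mult_left_mono) auto
  also have "\<dots> \<le> \<eta> * (- (\<mu> * \<eta> / m))"
    using y K0 mu m eta by (intro mult_right_mono_neg) auto
  finally show ?thesis using a by (simp add: algebra_simps)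
qed

lemma ode_limsup:
  fixes Y Z :: "real \<Rightarrow> real"
  assumes m: "m > 0" and mu: "\<mu> > 0"
    and Yd: "\<And>s. s > 0 \<Longrightarrow> (Y has_real_derivative r * Y s - \<mu> * Z s) (at s)"
    and Ynn: "\<And>s. s > 0 \<Longrightarrow> Y s \<ge> 0"
    and ZY: "\<And>s. s > 0 \<Longrightarrow> (Y s)\<^sup>2 \<le> m * Z s"
  shows "Limsup at_top (\<lambda>t. ereal (Y t)) \<le> ereal (m * max r 0 / \<mu>)"
proof (rule ereal_le_epsilon2)
  fix \<eta> :: real assume eta: "\<eta> > 0"
  define K where "K = m * max r 0 / \<mu>"
  define c where "c = \<mu> * \<eta> * \<eta> / m"
  have c: "c > 0" unfolding c_def using m mu eta by simp
  have neg: "r * Y s - \<mu> * Z s \<le> - c" if "s > 0" "Y s > K + \<eta>" for s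
    unfolding c_def by (rule neg_step[OF m mu eta K_def that(2) ZY[OF that(1)]])
  obtain s1 where s1: "s1 > 0" "Y s1 \<le> K + \<eta>"
    using eventually_below[OF Yd Ynn neg c] by blast
  have "Y t \<le> K + \<eta>" if "t \<ge> s1" for t
  proof (rule stay_below[OF Yd _ s1 that])
    fix s assume "s > 0" "Y s > K + \<eta>"
    then show "r * Y s - \<mu> * Z s < 0" using neg c by force
  qed
  then have "\<forall>\<^sub>F t in at_top. ereal (Y t) \<le> ereal (K + \<eta>)"
    unfolding eventually_at_top_linorder by auto
  then have "Limsup at_top (\<lambda>t. ereal (Y t)) \<le> ereal (K + \<eta>)" by (rule Limsup_bounded)
  then show "Limsup at_top (\<lambda>t. ereal (Y t)) \<le> ereal (m * max r 0 / \<mu>) + ereal \<eta>"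
    unfolding K_def by simp
qed

lemma ode_int:
  fixes Y Z :: "real \<Rightarrow> real"
  assumes mu: "\<mu> > 0"
    and Yc: "\<And>T. continuous_on {0..T} Y" and Zc: "\<And>T. continuous_on {0..T} Z"
    and Yd: "\<And>s. s > 0 \<Longrightarrow> (Y has_real_derivative r * Y s - \<mu> * Z s) (at s)"
    and Ynn: "\<And>s. s \<ge> 0 \<Longrightarrow> Y s \<ge> 0"
    and t: "0 \<le> t0" "t0 < t"
  shows "integral {t0..t} Z \<le> max r 0 / \<mu> * integral {t0..t} Y + 1 / \<mu> * Y t0"
proof -
  have Yc': "continuous_on {t0..t} Y" by (rule continuous_on_subset[OF Yc[of t]]) (use t in auto)
  have Zc': "continuous_on {t0..t} Z" by (rule continuous_on_subset[OF Zc[of t]]) (use t in auto)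
  have ftc: "((\<lambda>s. r * Y s - \<mu> * Z s) has_integral (Y t - Y t0)) {t0..t}"
  proof (rule fundamental_theorem_of_calculus_interior)
    show "t0 \<le> t" using t by simp
    show "continuous_on {t0..t} Y" by (rule Yc')
    fix x assume "x \<in> {t0<..<t}"
    then have "x > 0" using t by auto
    then show "(Y has_vector_derivative r * Y x - \<mu> * Z x) (at x)"
      using Yd has_real_derivative_iff_has_vector_derivative by blast
  qed
  have YI: "(Y has_integral integral {t0..t} Y) {t0..t}"
    using integrable_integral[OF integrable_continuous_interval[OF Yc']] .
  have ZI: "(Z has_integral integral {t0..t} Z) {t0..t}"
    using integrable_integral[OF integrable_continuous_interval[OF Zc']] .
  have "((\<lambda>s. r * Y s - \<mu> * Z s) has_integral (r * integral {t0..t} Y - \<mu> * integral {t0..t} Z)) {t0..t}"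
    by (intro has_integral_diff has_integral_mult_right YI ZI)
  then have eq: "r * integral {t0..t} Y - \<mu> * integral {t0..t} Z = Y t - Y t0"
    using ftc has_integral_unique by blast
  have IY: "integral {t0..t} Y \<ge> 0"
    by (rule integral_nonneg[OF integrable_continuous_interval[OF Yc']]) (use Ynn t in auto)
  have "r * integral {t0..t} Y \<le> max r 0 * integral {t0..t} Y" using IY by (intro mult_right_mono) auto
  then have "\<mu> * integral {t0..t} Z \<le> max r 0 * integral {t0..t} Y + Y t0"
    using eq Ynn[of t] t by linarith
  then show ?thesis using mu by (simp add: field_simps)
qed

lemma ode_decay:
  fixes Y Z :: "real \<Rightarrow> real"
  assumes m: "m > 0" and mu: "\<mu> > 0" and r: "r \<le> 0"
    and Yc: "\<And>T. continuous_on {0..T} Y"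
    and Yd: "\<And>s. s > 0 \<Longrightarrow> (Y has_real_derivative r * Y s - \<mu> * Z s) (at s)"
    and Ynn: "\<And>s. s \<ge> 0 \<Longrightarrow> Y s \<ge> 0"
    and ZY: "\<And>s. s > 0 \<Longrightarrow> (Y s)\<^sup>2 \<le> m * Z s"
    and Y0: "Y 0 > 0" and t: "t > 0"
  shows "Y t \<le> m / (\<mu> * (t + m / (\<mu> * Y 0)))"
proof -
  have Zp: "Z s \<ge> 0" if "s > 0" for s
  proof -
    have "0 \<le> m * Z s" using ZY[OF that] by (metis order.trans zero_le_power2)
    then show ?thesis using m by (simp add: zero_le_mult_iff)
  qed
  have Yd_le: "r * Y s - \<mu> * Z s \<le> 0" if "s > 0" for s
  proof -
    have "r * Y s \<le> 0" using r Ynn[of s] that by (simp add: mult_nonpos_nonneg)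
    moreover have "\<mu> * Z s \<ge> 0" using mu Zp[OF that] by simp
    ultimately show ?thesis by linarith
  qed
  have mono: "Y b \<le> Y a" if "0 \<le> a" "a \<le> b" for a b
  proof (rule DERIV_nonpos_imp_decreasing_open[OF that(2)])
    fix x assume "a < x" "x < b"
    then have "x > 0" using that by simp
    then show "\<exists>y. DERIV Y x :> y \<and> y \<le> 0" using Yd Yd_le by blast
  next
    show "continuous_on {a..b} Y" by (rule continuous_on_subset[OF Yc[of b]]) (use that in auto)
  qed
  have RHSp: "m / (\<mu> * (t + m / (\<mu> * Y 0))) > 0"
    using m mu Y0 t by (simp add: add_pos_pos)
  show ?thesis
  proof (cases "Y t > 0")
    case False
    then show ?thesis using RHSp by linarith
  next
    case True
    have Ypos: "Y s > 0" if "0 \<le> s" "s \<le> t" for s using mono[OF that] True by linarith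
    define V where "V s = inverse (Y s) - \<mu> / m * s" for s
    have "V 0 \<le> V t"
    proof (rule DERIV_nonneg_imp_increasing_open[of 0 t V])
      show "0 \<le> t" using t by simp
      have "continuous_on {0..t} (\<lambda>s. inverse (Y s))"
        by (rule continuous_on_inverse[OF Yc]) (use Ypos in force)
      then show "continuous_on {0..t} V"
        unfolding V_def[abs_def] by (rule continuous_on_diff[OF _ continuous_on_mult_left[OF continuous_on_id]])
      fix x assume x: "0 < x" "x < t"
      have Yx: "Y x > 0" using Ypos x by simp
      have d0: "((\<lambda>s. inverse (Y s)) has_real_derivative - ((r * Y x - \<mu> * Z x) * inverse (Y x ^ Suc (Suc 0)))) (at x)"
        by (rule DERIV_inverse_fun[OF Yd[OF x(1)]]) (use Yx in simp)
      have d1: "((\<lambda>s. \<mu> / m * s) has_real_derivative \<mu> / m) (at x)"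
        using m by (auto intro!: derivative_eq_intros)
      have d: "(V has_real_derivative (- ((r * Y x - \<mu> * Z x) * inverse ((Y x)\<^sup>2))) - \<mu> / m) (at x)"
        using DERIV_diff[OF d0 d1] unfolding V_def[abs_def] by (simp add: numeral_2_eq_2)
      have "\<mu> * (Y x)\<^sup>2 / m \<le> \<mu> * Z x" using ZY[OF x(1)] m mu by (simp add: field_simps)
      then have "r * Y x - \<mu> * Z x \<le> - (\<mu> / m * (Y x)\<^sup>2)"
        using r Yx by (simp add: mult_nonpos_nonneg) (smt (verit) mult_nonpos_nonneg less_imp_le)
      then have "(r * Y x - \<mu> * Z x) * inverse ((Y x)\<^sup>2) \<le> - (\<mu> / m * (Y x)\<^sup>2) * inverse ((Y x)\<^sup>2)"
        using Yx by (intro mult_right_mono) auto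
      also have "\<dots> = - (\<mu> / m)" using Yx by (simp add: field_simps)
      finally have "0 \<le> (- ((r * Y x - \<mu> * Z x) * inverse ((Y x)\<^sup>2))) - \<mu> / m" by linarith
      then show "\<exists>y. DERIV V x :> y \<and> 0 \<le> y" using d by blast
    qed
    then have A: "inverse (Y 0) + \<mu> / m * t \<le> inverse (Y t)" unfolding V_def by simp
    have Ap: "inverse (Y 0) + \<mu> / m * t > 0" using Y0 m mu t by (simp add: add_pos_pos)
    have "Y t \<le> inverse (inverse (Y 0) + \<mu> / m * t)"
      using A Ap True by (metis inverse_inverse_eq le_imp_inverse_le)
    also have "\<dots> = m / (\<mu> * (t + m / (\<mu> * Y 0)))"
    proof -
      have p: "m + \<mu> * t * Y 0 > 0" using m mu t Y0 by (simp add: add_pos_pos)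
      have e1: "\<mu> * (t + m / (\<mu> * Y 0)) = (m + \<mu> * t * Y 0) / Y 0" using mu Y0 by (simp add: field_simps)
      have e2: "inverse (Y 0) + \<mu> / m * t = (m + \<mu> * t * Y 0) / (m * Y 0)" using m Y0 by (simp add: field_simps)
      show ?thesis unfolding e1 e2 using p m Y0 by (simp add: field_simps)
    qed
    finally show ?thesis .
  qed
qed


lemma nn_part:
  fixes W Y Gw :: "real \<Rightarrow> real" and \<Phi> :: "real \<Rightarrow> ennreal"
  assumes Phi: "\<And>s. s > 0 \<Longrightarrow> \<Phi> s = ennreal (Gw s)"
    and Gnn: "\<And>s. s > 0 \<Longrightarrow> Gw s \<ge> 0"
    and Gc: "\<And>a b. 0 < a \<Longrightarrow> continuous_on {a..b} Gw"
    and Wc: "\<And>T. continuous_on {0..T} W"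
    and Wd: "\<And>s. s > 0 \<Longrightarrow> (W has_real_derivative Y s - Gw s) (at s)"
    and Wnn: "\<And>s. s > 0 \<Longrightarrow> W s \<ge> 0"
    and Yc: "\<And>T. continuous_on {0..T} Y" and Ynn: "\<And>s. s \<ge> 0 \<Longrightarrow> Y s \<ge> 0"
    and t: "0 \<le> t0" "t0 < t"
  shows "(\<integral>\<^sup>+ s\<in>{t0..t}. \<Phi> s \<partial>lborel) \<le> ennreal (W t0 + integral {t0..t} Y)"
proof -
  define a where "a k = t0 + (t - t0) / real (k + 2)" for k :: nat
  have a1: "t0 < a k" for k unfolding a_def using t by simp
  have a2: "a k < t" for k
  proof -
    have "(t - t0) / real (k + 2) < (t - t0) / 1" using t by (intro divide_strict_left_mono) auto
    then show ?thesis unfolding a_def by simp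
  qed
  have amono: "a j \<le> a k" if "k \<le> j" for j k
    unfolding a_def using t that by (simp add: frac_le)
  have alim: "a \<longlonglongrightarrow> t0"
  proof -
    have "(\<lambda>k. 1 / real (Suc (Suc k))) \<longlonglongrightarrow> (0::real)"
      using LIMSEQ_Suc[OF LIMSEQ_Suc[OF lim_1_over_n]] by simp
    from tendsto_mult_right_zero[OF this, of "t - t0"]
    have "(\<lambda>k. (t - t0) / real (k + 2)) \<longlonglongrightarrow> 0" by (simp add: numeral_2_eq_2)
    from tendsto_add[OF tendsto_const[of t0] this] show ?thesis unfolding a_def by simp
  qed
  have apos: "0 < a k" for k using a1[of k] t by linarith
  have ale: "a k \<le> t" for k using a2[of k] by linarith
  define C where "C = integral {t0..t} Y"
  define b where "b k = integral {a k..t} Gw" for k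
  have Gi: "Gw integrable_on {a k..t}" for k
    using integrable_continuous_interval[OF Gc[OF apos]] .
  have Yi: "Y integrable_on {c..d}" if "0 \<le> c" for c d
    using integrable_continuous_interval[OF continuous_on_subset[OF Yc[of d]]] that by auto
  define f where "f k s = ennreal (Gw s) * indicator {a k..t} s" for k s
  have step1: "(\<integral>\<^sup>+ s\<in>{t0..t}. \<Phi> s \<partial>lborel) = (\<integral>\<^sup>+ s. ennreal (Gw s) * indicator {t0<..t} s \<partial>lborel)"
  proof (rule nn_integral_cong_AE)
    show "AE s in lborel. \<Phi> s * indicator {t0..t} s = ennreal (Gw s) * indicator {t0<..t} s"
      using AE_lborel_singleton[of t0]
    proof (rule eventually_mono)
      fix s :: real assume s: "s \<noteq> t0"
      show "\<Phi> s * indicator {t0..t} s = ennreal (Gw s) * indicator {t0<..t} s"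
      proof (cases "s \<in> {t0..t}")
        case True
        then have "s \<in> {t0<..t}" "s > 0" using s t by auto
        then show ?thesis using True Phi by simp
      next
        case False
        then have "s \<notin> {t0<..t}" by auto
        then show ?thesis using False by simp
      qed
    qed
  qed
  have step2: "(SUP k. f k s) = ennreal (Gw s) * indicator {t0<..t} s" for s
  proof (cases "s \<in> {t0<..t}")
    case True
    have le: "f k s \<le> ennreal (Gw s)" for k unfolding f_def by (simp add: indicator_def)
    obtain k where k: "a k \<le> s"
    proof -
      have "\<forall>\<^sub>F k in sequentially. a k < s" using order_tendstoD(2)[OF alim] True by simp
      then obtain k where "a k < s" unfolding eventually_sequentially by blast
      then show ?thesis using that less_imp_le by blast
    qed
    have "f k s = ennreal (Gw s)" unfolding f_def using k True by simp
    then have "(SUP k. f k s) = ennreal (Gw s)"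
      by (intro antisym SUP_least le) (metis SUP_upper UNIV_I)
    then show ?thesis using True by simp
  next
    case False
    have "f k s = 0" for k
    proof -
      have "s \<notin> {a k..t}" using False a1[of k] by auto
      then show ?thesis unfolding f_def by simp
    qed
    then show ?thesis using False by simp
  qed
  have step3: "incseq f"
  proof (rule incseq_SucI, rule le_funI)
    fix k s
    have "{a k..t} \<subseteq> {a (Suc k)..t}" using amono[of k "Suc k"] by auto
    then show "f k s \<le> f (Suc k) s" unfolding f_def
      by (intro mult_left_mono) (auto simp: indicator_def)
  qed
  have step4: "f k \<in> borel_measurable lborel" for k
  proof -
    have m: "(\<lambda>s. indicator {a k..t} s *\<^sub>R Gw s) \<in> borel_measurable borel"
      by (rule borel_measurable_continuous_on_indicator) (use Gc[OF apos] in auto)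
    have "f k = (\<lambda>s. ennreal (indicator {a k..t} s *\<^sub>R Gw s))"
      unfolding f_def by (auto simp: indicator_def)
    moreover have "(\<lambda>s. ennreal (indicator {a k..t} s *\<^sub>R Gw s)) \<in> borel_measurable borel"
      using m by measurable
    ultimately show ?thesis by simp
  qed
  have step5: "(\<integral>\<^sup>+ s. f k s \<partial>lborel) = ennreal (b k)" for k
    unfolding f_def b_def
  proof (rule nn_integral_has_integral_lebesgue')
    show "0 \<le> Gw x" if "x \<in> {a k..t}" for x
    proof -
      have "x > 0" using that apos[of k] by simp
      then show ?thesis by (rule Gnn)
    qed
    show "(Gw has_integral integral {a k..t} Gw) {a k..t}" using integrable_integral[OF Gi] .
  qed
  have bj: "b j \<le> W (a j) + C" for j
  proof -
    have Wc': "continuous_on {a j..t} W"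
      by (rule continuous_on_subset[OF Wc[of t]]) (use apos[of j] in auto)
    have ftc: "((\<lambda>s. Y s - Gw s) has_integral (W t - W (a j))) {a j..t}"
    proof (rule fundamental_theorem_of_calculus_interior)
      show "a j \<le> t" using a2 less_imp_le by blast
      show "continuous_on {a j..t} W" by (rule Wc')
      fix x assume "x \<in> {a j<..<t}"
      then have "x > 0" using a1[of j] t by auto
      then show "(W has_vector_derivative Y x - Gw x) (at x)"
        using Wd has_real_derivative_iff_has_vector_derivative by blast
    qed
    have a0: "0 \<le> a j" using apos[of j] by simp
    have "((\<lambda>s. Y s - Gw s) has_integral (integral {a j..t} Y - b j)) {a j..t}"
      unfolding b_def by (intro has_integral_diff integrable_integral Yi[OF a0] Gi)
    then have eq: "integral {a j..t} Y - b j = W t - W (a j)" using ftc has_integral_unique by blast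
    have "integral {a j..t} Y \<le> C" unfolding C_def
    proof (rule integral_subset_le)
      show "{a j..t} \<subseteq> {t0..t}" using a1[of j] by auto
      show "Y integrable_on {a j..t}" by (rule Yi[OF a0])
      show "Y integrable_on {t0..t}" by (rule Yi) (use t in simp)
      show "\<forall>x\<in>{t0..t}. 0 \<le> Y x" using Ynn t by simp
    qed
    moreover have "W t \<ge> 0" using Wnn t by simp
    ultimately show ?thesis using eq by linarith
  qed
  have bk: "b k \<le> W t0 + C" for k
  proof (rule LIMSEQ_le_const)
    have "(\<lambda>j. W (a j)) \<longlonglongrightarrow> W t0"
    proof (rule continuous_on_tendsto_compose[OF Wc[of t] alim])
      show "t0 \<in> {0..t}" using t by simp
      show "\<forall>\<^sub>F j in sequentially. a j \<in> {0..t}"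
        by (rule always_eventually) (use apos ale less_imp_le in auto)
    qed
    then show "(\<lambda>j. W (a j) + C) \<longlonglongrightarrow> W t0 + C" by (intro tendsto_intros)
    show "\<exists>N. \<forall>j\<ge>N. b k \<le> W (a j) + C"
    proof (intro exI allI impI)
      fix j assume kj: "k \<le> j"
      have "b k \<le> b j" unfolding b_def
      proof (rule integral_subset_le)
        show "{a k..t} \<subseteq> {a j..t}" using amono[OF kj] by auto
        show "Gw integrable_on {a k..t}" "Gw integrable_on {a j..t}" by (rule Gi)+
        show "\<forall>x\<in>{a j..t}. 0 \<le> Gw x"
        proof
          fix x assume "x \<in> {a j..t}"
          then have "x > 0" using apos[of j] by simp
          then show "0 \<le> Gw x" by (rule Gnn)
        qed
      qed
      then show "b k \<le> W (a j) + C" using bj[of j] by linarith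
    qed
  qed
  have "(\<integral>\<^sup>+ s\<in>{t0..t}. \<Phi> s \<partial>lborel) = (\<integral>\<^sup>+ s. (SUP k. f k s) \<partial>lborel)"
    unfolding step1 step2 ..
  also have "\<dots> = (SUP k. \<integral>\<^sup>+ s. f k s \<partial>lborel)"
    by (rule nn_integral_monotone_convergence_SUP[OF step3 step4])
  also have "\<dots> \<le> ennreal (W t0 + C)"
    unfolding step5 by (intro SUP_least ennreal_leI bk)
  finally show ?thesis unfolding C_def .
qed


theorem lemma2p3:
  fixes \<Omega> :: "(real ^ 2) set"
    and \<phi> n0 :: "real ^ 2 \<Rightarrow> real"
    and n w P :: "real ^ 2 \<Rightarrow> real \<Rightarrow> real"
    and u :: "real ^ 2 \<Rightarrow> real \<Rightarrow> real ^ 2"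
    and chi r \<mu> :: real
  assumes dom: "smooth_bounded_domain \<Omega>"
    and phi: "W1inf \<Omega> \<phi>"
    and chi: "chi > 0"
    and mu: "\<mu> > 0"
    and n0_cont: "continuous_on (closure \<Omega>) n0"
    and n0_nonneg: "\<forall>x\<in>closure \<Omega>. n0 x \<ge> 0"
    and n0_nonzero: "\<exists>x\<in>closure \<Omega>. n0 x \<noteq> 0"
    and sol: "classical_solution \<Omega> \<phi> chi r \<mu> n0 n w u P"
    and n_nonneg: "\<forall>x\<in>\<Omega>. \<forall>t>0. n x t \<ge> 0"
    and w_nonneg: "\<forall>x\<in>\<Omega>. \<forall>t>0. w x t \<ge> 0"
  shows "(Limsup at_top (\<lambda>t. ereal (integral \<Omega> (\<lambda>x. \<bar>n x t\<bar>)))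
           \<le> ereal (measure lebesgue \<Omega> * max r 0 / \<mu>)) \<and>
     (\<forall>t0 t. 0 \<le> t0 \<and> t0 < t \<longrightarrow>
           integral {t0..t} (\<lambda>s. integral \<Omega> (\<lambda>x. \<bar>n x s\<bar>\<^sup>2))
             \<le> max r 0 / \<mu> * integral {t0..t} (\<lambda>s. integral \<Omega> (\<lambda>x. \<bar>n x s\<bar>))
               + 1 / \<mu> * integral \<Omega> (\<lambda>x. \<bar>n x t0\<bar>)) \<and>
     (\<forall>t0 t. 0 \<le> t0 \<and> t0 < t \<longrightarrow>
           (\<integral>\<^sup>+ s\<in>{t0..t}. (\<integral>\<^sup>+ x\<in>\<Omega>. ennreal ((norm (grad (\<lambda>y. w y s) x))\<^sup>2) \<partial>lborel) \<partial>lborel)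
             \<le> ennreal (integral \<Omega> (\<lambda>x. w x t0)
                        + integral {t0..t} (\<lambda>s. integral \<Omega> (\<lambda>x. \<bar>n x s\<bar>)))) \<and>
     (r \<le> 0 \<longrightarrow>
           (\<forall>t>0. integral \<Omega> (\<lambda>x. \<bar>n x t\<bar>)
              \<le> measure lebesgue \<Omega> /
                 (\<mu> * (t + measure lebesgue \<Omega> / (\<mu> * integral \<Omega> n0)))))"
proof -
  have Oo: "open \<Omega>" and Ob: "bounded \<Omega>" and One: "\<Omega> \<noteq> {}"
    and exrho: "\<exists>\<rho>. defining_function \<Omega> \<rho>"
    using dom unfolding smooth_bounded_domain_def by auto
  define \<rho> where "\<rho> = (SOME \<rho>. defining_function \<Omega> \<rho>)"
  have df: "defining_function \<Omega> \<rho>" unfolding \<rho>_def using someI_ex[OF exrho] .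
  then obtain D where D0: "D [] = \<rho>" and Dc: "\<And>ks. continuous_on UNIV (D ks)"
      and Dd: "\<And>ks i x. has_pd i (D ks) x (D (i # ks) x)"
    unfolding defining_function_def smooth_fun_def by blast
  have Or: "\<Omega> = {x. \<rho> x < 0}" and gne: "\<And>x. \<rho> x = 0 \<Longrightarrow> grad \<rho> x \<noteq> 0"
    using df unfolding defining_function_def by auto
  have gradeq: "grad \<rho> x = (\<chi> i. D [i] x)" for x
  proof -
    have "pd i \<rho> x = D [i] x" for i using pd_eq[of i \<rho> x "D [i] x"] Dd[where ks="[]" and i=i and x=x] D0 by simp
    then show ?thesis unfolding grad_def by simp
  qed
  interpret dom \<Omega> \<rho> D
  proof
    show "\<And>x. \<rho> x = 0 \<Longrightarrow> (\<chi> i. D [i] x) \<noteq> 0" using gne gradeq by metis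
  qed (use Oo Ob Or D0 Dc Dd in auto)
  have nu: "outward_normal \<Omega> x = (1 / norm (gr x)) *\<^sub>R gr x" for x
    unfolding outward_normal_def Let_def \<rho>_def[symmetric] grad_rho ..
  have bconv: "((\<lambda>y. F y \<bullet> gr x) \<longlongrightarrow> 0) (at x within \<Omega>)"
    if x: "x \<in> frontier \<Omega>" and h: "((\<lambda>y. F y \<bullet> outward_normal \<Omega> x) \<longlongrightarrow> 0) (at x within \<Omega>)" for F x
  proof -
    have gx: "gr x \<noteq> 0" using ng[OF frontier_rho[OF x]] by (simp add: gr_def)
    have "((\<lambda>y. norm (gr x) * (F y \<bullet> outward_normal \<Omega> x)) \<longlongrightarrow> norm (gr x) * 0) (at x within \<Omega>)"
      by (intro tendsto_intros h)
    moreover have "norm (gr x) * (F y \<bullet> outward_normal \<Omega> x) = F y \<bullet> gr x" for y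
      unfolding nu using gx by simp
    ultimately show ?thesis by simp
  qed
  have Cn: "C21 \<Omega> n" and Cw: "C21 \<Omega> w" and Cu: "\<And>i. C21 \<Omega> (ucomp u i)"
    and init: "\<And>x. x \<in> closure \<Omega> \<Longrightarrow> n x 0 = n0 x"
    and eqn: "\<And>x t. x \<in> \<Omega> \<Longrightarrow> t > 0 \<Longrightarrow> dt n x t + u x t \<bullet> grad (\<lambda>y. n y t) x
          = lap (\<lambda>y. n y t) x + chi * divg (\<lambda>y. n y t *\<^sub>R grad (\<lambda>z. w z t) y) x
            + n x t * (r - \<mu> * n x t)"
    and eqw: "\<And>x t. x \<in> \<Omega> \<Longrightarrow> t > 0 \<Longrightarrow> dt w x t + u x t \<bullet> grad (\<lambda>y. w y t) x
          = lap (\<lambda>y. w y t) x - (norm (grad (\<lambda>y. w y t) x))\<^sup>2 + n x t"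
    and divu: "\<And>x t. x \<in> \<Omega> \<Longrightarrow> t > 0 \<Longrightarrow> divg (\<lambda>y. u y t) x = 0"
    and bdry: "\<And>x t. x \<in> frontier \<Omega> \<Longrightarrow> t > 0 \<Longrightarrow>
        ((\<lambda>y. grad (\<lambda>z. n z t) y \<bullet> outward_normal \<Omega> x) \<longlongrightarrow> 0) (at x within \<Omega>) \<and>
        ((\<lambda>y. grad (\<lambda>z. w z t) y \<bullet> outward_normal \<Omega> x) \<longlongrightarrow> 0) (at x within \<Omega>) \<and>
        u x t = 0"
    using sol unfolding classical_solution_def by auto
  define Y where "Y s = integral \<Omega> (\<lambda>x. n x s)" for s
  define Z where "Z s = integral \<Omega> (\<lambda>x. (n x s)\<^sup>2)" for s
  define W where "W s = integral \<Omega> (\<lambda>x. w x s)" for s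
  define Gw where "Gw s = integral \<Omega> (\<lambda>x. (norm (grad (\<lambda>y. w y s) x))\<^sup>2)" for s
  define m where "m = measure lebesgue \<Omega>"
  have nnn: "n x s \<ge> 0" if "x \<in> \<Omega>" "s \<ge> 0" for x s
  proof (cases "s = 0")
    case True
    have xc: "x \<in> closure \<Omega>" using that(1) closure_subset by blast
    then show ?thesis using init[OF xc] n0_nonneg True by simp
  next
    case False
    then show ?thesis using n_nonneg that by auto
  qed
  have Yd: "(Y has_real_derivative r * Y s - \<mu> * Z s) (at s)" if s: "s > 0" for s
  proof -
    have "integral \<Omega> (\<lambda>x. dt n x s) = r * Y s - \<mu> * Z s"
      unfolding Y_def Z_def
    proof (rule n_identity[OF Cn Cw Cu s])
      show "\<And>x. x \<in> \<Omega> \<Longrightarrow> dt n x s + u x s \<bullet> grad (\<lambda>y. n y s) x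
          = lap (\<lambda>y. n y s) x + chi * divg (\<lambda>y. n y s *\<^sub>R grad (\<lambda>z. w z s) y) x
            + n x s * (r - \<mu> * n x s)" using eqn s by blast
      show "\<And>x. x \<in> \<Omega> \<Longrightarrow> divg (\<lambda>y. u y s) x = 0" using divu s by blast
      show "\<And>x. x \<in> frontier \<Omega> \<Longrightarrow> ((\<lambda>y. grad (\<lambda>z. n z s) y \<bullet> gr x) \<longlongrightarrow> 0) (at x within \<Omega>)"
        using bdry s bconv by blast
      show "\<And>x. x \<in> frontier \<Omega> \<Longrightarrow> ((\<lambda>y. grad (\<lambda>z. w z s) y \<bullet> gr x) \<longlongrightarrow> 0) (at x within \<Omega>)"
        using bdry s bconv by blast
      show "\<And>x. x \<in> frontier \<Omega> \<Longrightarrow> u x s = 0" using bdry s by blast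
    qed
    then show ?thesis using time_deriv[OF Cn s] unfolding Y_def by simp
  qed
  have wid: "integral \<Omega> (\<lambda>x. dt w x s) = Y s - Gw s \<and> (\<lambda>x. (norm (grad (\<lambda>y. w y s) x))\<^sup>2) integrable_on \<Omega>"
    if s: "s > 0" for s
  proof -
    have a: "\<And>x. x \<in> \<Omega> \<Longrightarrow> dt w x s + u x s \<bullet> grad (\<lambda>y. w y s) x
          = lap (\<lambda>y. w y s) x - (norm (grad (\<lambda>y. w y s) x))\<^sup>2 + n x s" using eqw s by blast
    have b: "\<And>x. x \<in> \<Omega> \<Longrightarrow> divg (\<lambda>y. u y s) x = 0" using divu s by blast
    have c: "\<And>x. x \<in> frontier \<Omega> \<Longrightarrow> ((\<lambda>y. grad (\<lambda>z. w z s) y \<bullet> gr x) \<longlongrightarrow> 0) (at x within \<Omega>)"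
      using bdry s bconv by blast
    have d: "\<And>x. x \<in> frontier \<Omega> \<Longrightarrow> u x s = 0" using bdry s by blast
    show ?thesis using w_identity[OF Cn Cw Cu s a b c d] unfolding Y_def Gw_def by simp
  qed
  have Wd: "(W has_real_derivative Y s - Gw s) (at s)" if s: "s > 0" for s
    using time_deriv[OF Cw s] wid[OF s] unfolding W_def by simp
  have Yc: "continuous_on {0..T} Y" for T unfolding Y_def using time_cont(1)[OF Cn] by simp
  have Zc: "continuous_on {0..T} Z" for T unfolding Z_def using time_cont(2)[OF Cn] by simp
  have Wc: "continuous_on {0..T} W" for T unfolding W_def using time_cont(1)[OF Cw] by simp
  have Gc: "continuous_on {a..b} Gw" if "0 < a" for a b unfolding Gw_def using gw_cont[OF Cw that] .
  have nint: "(\<lambda>x. n x s) integrable_on \<Omega>" "(\<lambda>x. (n x s)\<^sup>2) integrable_on \<Omega>" if "s \<ge> 0" for s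
  proof -
    have c: "continuous_on (closure \<Omega>) (\<lambda>x. n x s)"
    proof -
      have c0: "continuous_on (closure \<Omega> \<times> {0..}) (\<lambda>(x, t). n x t)" using Cn unfolding C21_def by blast
      have "continuous_on (closure \<Omega>) (\<lambda>x. (\<lambda>(x, t). n x t) (x, s))"
        by (rule continuous_on_compose2[OF c0]) (use that in \<open>auto intro!: continuous_intros\<close>)
      then show ?thesis by simp
    qed
    show "(\<lambda>x. n x s) integrable_on \<Omega>" by (rule int_cl[OF c])
    show "(\<lambda>x. (n x s)\<^sup>2) integrable_on \<Omega>" by (rule int_cl) (intro continuous_intros c)
  qed
  have Ynn: "Y s \<ge> 0" if "s \<ge> 0" for s
    unfolding Y_def by (rule integral_nonneg[OF nint(1)[OF that]]) (use nnn that in auto)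
  have Wnn: "W s \<ge> 0" if "s > 0" for s
  proof -
    have "(\<lambda>x. w x s) integrable_on \<Omega>" using int_cl[OF C21_facts(1)[OF Cw that Ob]] .
    then show ?thesis unfolding W_def by (rule integral_nonneg) (use w_nonneg that in auto)
  qed
  have Gnn: "Gw s \<ge> 0" if "s > 0" for s
    unfolding Gw_def by (rule integral_nonneg) (use wid[OF that] in auto)
  obtain x0 where x0: "x0 \<in> closure \<Omega>" "n0 x0 \<noteq> 0" using n0_nonzero by blast
  have n0p: "n0 x0 > 0" using x0 n0_nonneg by force
  obtain x1 r1 where x1: "ball x1 r1 \<subseteq> \<Omega>" "r1 > 0" "\<And>y. y \<in> ball x1 r1 \<Longrightarrow> n0 y \<ge> n0 x0 / 2"
  proof -
    obtain \<delta> where d: "\<delta> > 0" and dd: "\<And>y. y \<in> closure \<Omega> \<Longrightarrow> dist y x0 < \<delta> \<Longrightarrow> dist (n0 y) (n0 x0) < n0 x0 / 2"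
      using n0_cont x0(1) n0p unfolding continuous_on_iff by (metis half_gt_zero)
    obtain x1 where x1: "x1 \<in> \<Omega>" "dist x1 x0 < \<delta> / 2"
      using x0(1) d unfolding closure_approachable by (metis half_gt_zero dist_commute)
    obtain r where r: "r > 0" "ball x1 r \<subseteq> \<Omega>" using Oo x1(1) open_contains_ball by blast
    define r1 where "r1 = min r (\<delta> / 2)"
    have "ball x1 r1 \<subseteq> \<Omega>" using r unfolding r1_def by auto
    moreover have "r1 > 0" using r d unfolding r1_def by simp
    moreover have "n0 y \<ge> n0 x0 / 2" if "y \<in> ball x1 r1" for y
    proof -
      have yO: "y \<in> \<Omega>" using that r unfolding r1_def by auto
      have "dist y x0 \<le> dist y x1 + dist x1 x0" by (rule dist_triangle)
      also have "dist y x1 < \<delta> / 2" using that unfolding r1_def by (simp add: dist_commute)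
      finally have "dist y x0 < \<delta>" using x1 by linarith
      then have "dist (n0 y) (n0 x0) < n0 x0 / 2" using dd yO closure_subset by blast
      then have "\<bar>n0 y - n0 x0\<bar> < n0 x0 / 2" by (simp add: dist_real_def)
      then show ?thesis unfolding abs_less_iff by linarith
    qed
    ultimately show ?thesis using that by blast
  qed
  have n0i: "n0 integrable_on \<Omega>" by (rule int_cl[OF n0_cont])
  have Y0eq: "Y 0 = integral \<Omega> n0"
    unfolding Y_def by (rule integral_cong) (use init closure_subset in blast)
  have Y0: "Y 0 > 0"
    unfolding Y0eq by (rule pos_int[OF n0i _ x1(1,2) _ x1(3)]) (use n0_nonneg closure_subset n0p in auto)
  have mpos: "m > 0"
  proof -
    have "integral \<Omega> (\<lambda>x. 1::real) > 0"
      by (rule pos_int[OF integrable_on_const[OF lmeas] _ x1(1,2), of 1]) auto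
    then show ?thesis unfolding m_def using lmeasure_integral[OF lmeas] by simp
  qed
  have ZY: "(Y s)\<^sup>2 \<le> m * Z s" if "s > 0" for s
    unfolding Y_def Z_def m_def by (rule cs[OF nint[of s]]) (use that mpos m_def in auto)
  have absY: "integral \<Omega> (\<lambda>x. \<bar>n x s\<bar>) = Y s" if "s \<ge> 0" for s
    unfolding Y_def by (rule integral_cong) (use nnn that in auto)
  have absZ: "integral \<Omega> (\<lambda>x. \<bar>n x s\<bar>\<^sup>2) = Z s" for s
    unfolding Z_def by simp
  have intY: "integral {t0..t} (\<lambda>s. integral \<Omega> (\<lambda>x. \<bar>n x s\<bar>)) = integral {t0..t} Y" if "0 \<le> t0" for t0 t
    by (rule integral_cong) (use absY that in auto)
  show ?thesis
  proof (intro conjI allI impI)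
    have "Limsup at_top (\<lambda>t. ereal (integral \<Omega> (\<lambda>x. \<bar>n x t\<bar>))) = Limsup at_top (\<lambda>t. ereal (Y t))"
      by (rule Limsup_eq) (use absY in \<open>auto simp: eventually_at_top_linorder\<close>)
    also have "\<dots> \<le> ereal (m * max r 0 / \<mu>)"
      by (rule ode_limsup[OF mpos mu Yd]) (use Ynn ZY in auto)
    finally show "Limsup at_top (\<lambda>t. ereal (integral \<Omega> (\<lambda>x. \<bar>n x t\<bar>))) \<le> ereal (measure lebesgue \<Omega> * max r 0 / \<mu>)"
      unfolding m_def .
  next
    fix t0 t :: real assume tt: "0 \<le> t0 \<and> t0 < t"
    have "integral {t0..t} Z \<le> max r 0 / \<mu> * integral {t0..t} Y + 1 / \<mu> * Y t0"
      by (rule ode_int[OF mu Yc Zc Yd Ynn]) (use tt in auto)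
    then show "integral {t0..t} (\<lambda>s. integral \<Omega> (\<lambda>x. \<bar>n x s\<bar>\<^sup>2))
             \<le> max r 0 / \<mu> * integral {t0..t} (\<lambda>s. integral \<Omega> (\<lambda>x. \<bar>n x s\<bar>))
               + 1 / \<mu> * integral \<Omega> (\<lambda>x. \<bar>n x t0\<bar>)"
      unfolding absZ intY[of t0 t, OF conjunct1[OF tt]] absY[OF conjunct1[OF tt]]
      by (simp add: Z_def[symmetric])
  next
    fix t0 t :: real assume tt: "0 \<le> t0 \<and> t0 < t"
    define \<Phi> where "\<Phi> s = (\<integral>\<^sup>+ x\<in>\<Omega>. ennreal ((norm (grad (\<lambda>y. w y s) x))\<^sup>2) \<partial>lborel)" for s
    have Phi: "\<Phi> s = ennreal (Gw s)" if "s > 0" for s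
      unfolding \<Phi>_def Gw_def
      by (rule nn_integral_has_integral_lebesgue') (use wid[OF that] in \<open>auto intro: integrable_integral\<close>)
    have "(\<integral>\<^sup>+ s\<in>{t0..t}. \<Phi> s \<partial>lborel) \<le> ennreal (W t0 + integral {t0..t} Y)"
      by (rule nn_part[OF Phi Gnn Gc Wc Wd Wnn Yc Ynn]) (use tt in auto)
    then show "(\<integral>\<^sup>+ s\<in>{t0..t}. (\<integral>\<^sup>+ x\<in>\<Omega>. ennreal ((norm (grad (\<lambda>y. w y s) x))\<^sup>2) \<partial>lborel) \<partial>lborel)
             \<le> ennreal (integral \<Omega> (\<lambda>x. w x t0)
                        + integral {t0..t} (\<lambda>s. integral \<Omega> (\<lambda>x. \<bar>n x s\<bar>)))"
      unfolding \<Phi>_def W_def intY[of t0 t, OF conjunct1[OF tt]] .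
  next
    fix t :: real assume r: "r \<le> 0" and t: "t > 0"
    have "Y t \<le> m / (\<mu> * (t + m / (\<mu> * Y 0)))"
      by (rule ode_decay[OF mpos mu r Yc Yd Ynn ZY Y0 t])
    then show "integral \<Omega> (\<lambda>x. \<bar>n x t\<bar>)
              \<le> measure lebesgue \<Omega> / (\<mu> * (t + measure lebesgue \<Omega> / (\<mu> * integral \<Omega> n0)))"
      using absY[of t] t Y0eq m_def by simp
  qed
qed


end
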